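(* For $n\ge2$, there is a well-defined surjective homomorphism $\psi_H:TVH_n\to A_n$ with $\psi_H(x_{kl})=e$ ($1\le k\ne l\le n$) and $\psi_H(\gamma_j)=\gamma_j$, which is the identity on $A_n$. Its kernel $HL_n=\ker\psi_H$ is generated by the elements $x_{ij}^{(0)}=x_{ij}$, $x_{ij}^{(i)}=x_{ij}^{\gamma_i}$, $x_{ij}^{(j)}=x_{ij}^{\gamma_j}$, $x_{ij}^{(ij)}=x_{ij}^{\gamma_i\gamma_j}$ for $1\le i<j\le n$, and $TVH_n=HL_n\rtimes A_n$.
   Context: For $n\ge 2$, the twisted virtual braid group $TVB_n$ is the group with generators $\sigma_1,\dots,\sigma_{n-1}$, $\rho_1,\dots,\rho_{n-1}$, $\gamma_1,\dots,\gamma_n$ and defining relations: $\sigma_i\sigma_{i+1}\sigma_i=\sigma_{i+1}\sigma_i\sigma_{i+1}$ ($1\le i\le n-2$); $\sigma_i\sigma_j=\sigma_j\sigma_i$ ($|i-j|\ge 2$); $\rho_i^2=1$; $\rho_i\rho_j=\rho_j\rho_i$ ($|i-j|\ge2$); $\rho_i\rho_{i+1}\rho_i=\rho_{i+1}\rho_i\rho_{i+1}$ ($1\le i\le n-2$); $\sigma_i\rho_j=\rho_j\sigma_i$ ($|i-j|\ge 2$); $\rho_i\rho_{i+1}\sigma_i=\sigma_{i+1}\rho_i\rho_{i+1}$ ($1\le i\le n-2$); $\gamma_i^2=1$ and $\gamma_i\gamma_j=\gamma_j\gamma_i$ (all $i,j$); $\gamma_j\rho_i=\rho_i\gamma_j$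 and $\gamma_j\sigma_i=\sigma_i\gamma_j$ for $j\notin\{i,i+1\}$; $\rho_i\gamma_i=\gamma_{i+1}\rho_i$ ($1\le i\le n-1$); $\rho_i\sigma_i\rho_i=\gamma_{i+1}\gamma_i\sigma_i\gamma_i\gamma_{i+1}$ ($1\le i\le n-1$). $\varphi_H:TVB_n\to S_n$ is the homomorphism with $\sigma_i\mapsto e$, $\rho_i\mapsto(i,i+1)$, $\gamma_j\mapsto e$, and $TVH_n=\ker\varphi_H$. $A_n=\langle\gamma_1,\dots,\gamma_n\rangle\le TVH_n$. In $TVB_n$ define $x_{i,i+1}=\sigma_i$, $x_{i+1,i}=\rho_i\sigma_i\rho_i$ ($1\le i\le n-1$), and for $1\le i<j-1\le n-1$: $x_{ij}=\rho_{j-1}\cdots\rho_{i+1}\sigma_i\rho_{i+1}\cdots\rho_{j-1}$, $x_{ji}=\rho_{j-1}\cdots\rho_{i+1}\rho_i\sigma_i\rho_i\rho_{i+1}\cdots\rho_{j-1}$; the $x_{kl}$ and $\gamma_j$ generate $TVH_n$. Conjugation notation: $a^b=b^{-1}ab$. *)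

theory Defs
  imports "HOL-Algebra.Algebra" "HOL-Algebra.Sym_Groups"
begin

datatype gen = Sg nat | Rg nat | Gg nat

text \<open>A letter is a generator together with an exponent sign (True = +1, False = -1).\<close>
type_synonym letter = "gen \<times> bool"
type_synonym word = "letter list"

fun valid_gen :: "nat \<Rightarrow> gen \<Rightarrow> bool" where
  "valid_gen n (Sg i) = (1 \<le> i \<and> i \<le> n - 1)"
| "valid_gen n (Rg i) = (1 \<le> i \<and> i \<le> n - 1)"
| "valid_gen n (Gg j) = (1 \<le> j \<and> j \<le> n)"

definition words :: "nat \<Rightarrow> word set" where
  "words n = {w. \<forall>x\<in>set w. valid_gen n (fst x)}"

definition inv_letter :: "letter \<Rightarrow> letter" where
  "inv_letter x = (fst x, \<not> snd x)"

abbreviation sw :: "nat \<Rightarrow> word" where "sw i \<equiv> [(Sg i, True)]"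
abbreviation rw :: "nat \<Rightarrow> word" where "rw i \<equiv> [(Rg i, True)]"
abbreviation gw :: "nat \<Rightarrow> word" where "gw i \<equiv> [(Gg i, True)]"

text \<open>Defining relations (as pairs lhs = rhs), together with free cancellation.\<close>
definition tvb_rels :: "nat \<Rightarrow> (word \<times> word) set" where
  "tvb_rels n =
     {([x, inv_letter x], []) | x. valid_gen n (fst x)}
   \<union> {(sw i @ sw (i+1) @ sw i, sw (i+1) @ sw i @ sw (i+1)) | i. 1 \<le> i \<and> i \<le> n - 2}
   \<union> {(sw i @ sw j, sw j @ sw i) | i j. 1 \<le> i \<and> i \<le> n - 1 \<and> 1 \<le> j \<and> j \<le> n - 1 \<and> (i + 2 \<le> j \<or> j + 2 \<le> i)}
   \<union> {(rw i @ rw i, []) | i. 1 \<le> i \<and> i \<le> n - 1}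
   \<union> {(rw i @ rw j, rw j @ rw i) | i j. 1 \<le> i \<and> i \<le> n - 1 \<and> 1 \<le> j \<and> j \<le> n - 1 \<and> (i + 2 \<le> j \<or> j + 2 \<le> i)}
   \<union> {(rw i @ rw (i+1) @ rw i, rw (i+1) @ rw i @ rw (i+1)) | i. 1 \<le> i \<and> i \<le> n - 2}
   \<union> {(sw i @ rw j, rw j @ sw i) | i j. 1 \<le> i \<and> i \<le> n - 1 \<and> 1 \<le> j \<and> j \<le> n - 1 \<and> (i + 2 \<le> j \<or> j + 2 \<le> i)}
   \<union> {(rw i @ rw (i+1) @ sw i, sw (i+1) @ rw i @ rw (i+1)) | i. 1 \<le> i \<and> i \<le> n - 2}
   \<union> {(gw i @ gw i, []) | i. 1 \<le> i \<and> i \<le> n}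
   \<union> {(gw i @ gw j, gw j @ gw i) | i j. 1 \<le> i \<and> i \<le> n \<and> 1 \<le> j \<and> j \<le> n}
   \<union> {(gw j @ rw i, rw i @ gw j) | i j. 1 \<le> i \<and> i \<le> n - 1 \<and> 1 \<le> j \<and> j \<le> n \<and> j \<noteq> i \<and> j \<noteq> i + 1}
   \<union> {(gw j @ sw i, sw i @ gw j) | i j. 1 \<le> i \<and> i \<le> n - 1 \<and> 1 \<le> j \<and> j \<le> n \<and> j \<noteq> i \<and> j \<noteq> i + 1}
   \<union> {(rw i @ gw i, gw (i+1) @ rw i) | i. 1 \<le> i \<and> i \<le> n - 1}
   \<union> {(rw i @ sw i @ rw i, gw (i+1) @ gw i @ sw i @ gw i @ gw (i+1)) | i. 1 \<le> i \<and> i \<le> n - 1}"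

inductive_set tvb_eq :: "nat \<Rightarrow> (word \<times> word) set" for n where
  refl: "w \<in> words n \<Longrightarrow> (w, w) \<in> tvb_eq n"
| sym: "(u, v) \<in> tvb_eq n \<Longrightarrow> (v, u) \<in> tvb_eq n"
| trans: "(u, v) \<in> tvb_eq n \<Longrightarrow> (v, w) \<in> tvb_eq n \<Longrightarrow> (u, w) \<in> tvb_eq n"
| rel: "(l, r) \<in> tvb_rels n \<Longrightarrow> u \<in> words n \<Longrightarrow> v \<in> words n \<Longrightarrow> (u @ l @ v, u @ r @ v) \<in> tvb_eq n"

definition cls :: "nat \<Rightarrow> word \<Rightarrow> word set" where
  "cls n w = tvb_eq n `` {w}"

definition TVB :: "nat \<Rightarrow> word set monoid" where
  "TVB n = \<lparr> carrier = words n // tvb_eq n,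
             monoid.mult = (\<lambda>A B. \<Union>a\<in>A. \<Union>b\<in>B. cls n (a @ b)),
             one = cls n [] \<rparr>"

definition sigma :: "nat \<Rightarrow> nat \<Rightarrow> word set" where "sigma n i = cls n (sw i)"
definition rho :: "nat \<Rightarrow> nat \<Rightarrow> word set" where "rho n i = cls n (rw i)"
definition gamma :: "nat \<Rightarrow> nat \<Rightarrow> word set" where "gamma n j = cls n (gw j)"

definition word_perm :: "word \<Rightarrow> nat \<Rightarrow> nat" where
  "word_perm w = foldr (\<lambda>x p. case fst x of Rg i \<Rightarrow> Transposition.transpose i (i+1) \<circ> p | _ \<Rightarrow> p) w id"

definition phiH :: "word set \<Rightarrow> nat \<Rightarrow> nat" where
  "phiH C = word_perm (SOME w. w \<in> C)"

definition TVH_set :: "nat \<Rightarrow> word set set" where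
  "TVH_set n = kernel (TVB n) (sym_group n) phiH"

definition TVH :: "nat \<Rightarrow> word set monoid" where
  "TVH n = (TVB n)\<lparr>carrier := TVH_set n\<rparr>"

definition A_set :: "nat \<Rightarrow> word set set" where
  "A_set n = generate (TVB n) {gamma n j | j. 1 \<le> j \<and> j \<le> n}"

definition A_grp :: "nat \<Rightarrow> word set monoid" where
  "A_grp n = (TVB n)\<lparr>carrier := A_set n\<rparr>"

definition rup :: "nat \<Rightarrow> nat \<Rightarrow> word" where
  "rup i j = map (\<lambda>k. (Rg k, True)) [i..<j]"

definition xw :: "nat \<Rightarrow> nat \<Rightarrow> word" where
  "xw i j = (if i < j then rev (rup (i+1) j) @ sw i @ rup (i+1) j
             else rev (rup j i) @ sw j @ rup j i)"

definition xg :: "nat \<Rightarrow> nat \<Rightarrow> nat \<Rightarrow> word set" where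
  "xg n i j = cls n (xw i j)"

definition conjB :: "nat \<Rightarrow> word set \<Rightarrow> word set \<Rightarrow> word set" where
  "conjB n a b = inv\<^bsub>TVB n\<^esub> b \<otimes>\<^bsub>TVB n\<^esub> a \<otimes>\<^bsub>TVB n\<^esub> b"

definition HL_gens :: "nat \<Rightarrow> word set set" where
  "HL_gens n = (\<Union>i\<in>{1..n}. \<Union>j\<in>{i<..n}.
     {xg n i j, conjB n (xg n i j) (gamma n i), conjB n (xg n i j) (gamma n j),
      conjB n (xg n i j) (gamma n i \<otimes>\<^bsub>TVB n\<^esub> gamma n j)})"

end

theory Submission
  imports Defs
begin

lemma rels_words: "(l,r) \<in> tvb_rels n \<Longrightarrow> l \<in> words n \<and> r \<in> words n"
  unfolding tvb_rels_def words_def inv_letter_def by (elim UnE; force)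

lemma tvb_eq_words: "(u,v) \<in> tvb_eq n \<Longrightarrow> u \<in> words n \<and> v \<in> words n"
  by (induction rule: tvb_eq.induct) (fastforce simp: words_def dest!: rels_words)+

lemma words_append[simp]: "u @ v \<in> words n \<longleftrightarrow> u \<in> words n \<and> v \<in> words n"
  by (auto simp: words_def)

lemma words_Cons[simp]: "x # v \<in> words n \<longleftrightarrow> valid_gen n (fst x) \<and> v \<in> words n"
  by (auto simp: words_def)

lemma words_Nil[simp]: "[] \<in> words n"
  by (auto simp: words_def)

lemma tvb_equiv: "equiv (words n) (tvb_eq n)"
proof (rule equivI)
  show "refl_on (words n) (tvb_eq n)" unfolding refl_on_def by (auto dest: tvb_eq_words intro: tvb_eq.refl)
  show "sym (tvb_eq n)" unfolding sym_def using tvb_eq.sym by blast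
  show "trans (tvb_eq n)" unfolding trans_def using tvb_eq.trans by blast
  show "tvb_eq n \<subseteq> words n \<times> words n" using tvb_eq_words by auto
qed

lemma tvb_eq_app_right: "(u,v) \<in> tvb_eq n \<Longrightarrow> w \<in> words n \<Longrightarrow> (u@w, v@w) \<in> tvb_eq n"
proof (induction rule: tvb_eq.induct)
  case (rel l r u v)
  then show ?case using tvb_eq.rel[of l r n u "v@w"] by simp
qed (auto intro: tvb_eq.intros)

lemma tvb_eq_app_left: "(u,v) \<in> tvb_eq n \<Longrightarrow> w \<in> words n \<Longrightarrow> (w@u, w@v) \<in> tvb_eq n"
proof (induction rule: tvb_eq.induct)
  case (rel l r u v)
  then show ?case using tvb_eq.rel[of l r n "w@u" v] by simp
qed (auto intro: tvb_eq.intros)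

lemma tvb_eq_app: "(u,v) \<in> tvb_eq n \<Longrightarrow> (u',v') \<in> tvb_eq n \<Longrightarrow> (u@u', v@v') \<in> tvb_eq n"
  by (meson tvb_eq.trans tvb_eq_app_left tvb_eq_app_right tvb_eq_words)

lemma cls_notword: "u \<notin> words n \<Longrightarrow> cls n u = {}"
  unfolding cls_def using tvb_eq_words by blast

lemma cls_self: "u \<in> words n \<Longrightarrow> u \<in> cls n u"
  unfolding cls_def by (auto intro: tvb_eq.refl)

lemma cls_mem: "v \<in> cls n u \<longleftrightarrow> (u,v) \<in> tvb_eq n"
  unfolding cls_def by auto

lemma cls_eq_iff: "u \<in> words n \<Longrightarrow> cls n u = cls n v \<longleftrightarrow> (u,v) \<in> tvb_eq n"
proof (cases "v \<in> words n")
  case True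
  assume "u \<in> words n"
  then show ?thesis using eq_equiv_class_iff[OF tvb_equiv, of u n v] True unfolding cls_def by simp
next
  case False
  assume u: "u \<in> words n"
  then have "cls n u \<noteq> cls n v" using cls_notword[OF False] cls_self[OF u] by auto
  moreover have "(u,v) \<notin> tvb_eq n" using False tvb_eq_words by blast
  ultimately show ?thesis by simp
qed

lemma cls_eq_general: "cls n u = cls n v \<longleftrightarrow> (u \<notin> words n \<and> v \<notin> words n) \<or> (u,v) \<in> tvb_eq n"
  by (metis cls_eq_iff cls_notword cls_self empty_iff tvb_eq_words)

lemma cls_ctx: "cls n u = cls n v \<Longrightarrow> a \<in> words n \<Longrightarrow> b \<in> words n \<Longrightarrow> cls n (a@u@b) = cls n (a@v@b)"
  unfolding cls_eq_general using tvb_eq_app_left tvb_eq_app_right by auto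

lemma cls_ctx2: "cls n u = cls n v \<Longrightarrow> cls n u' = cls n v' \<Longrightarrow> cls n (u@u') = cls n (v@v')"
  unfolding cls_eq_general using tvb_eq_app by auto

lemma cls_rel: "(l,r) \<in> tvb_rels n \<Longrightarrow> cls n l = cls n r"
  using tvb_eq.rel[of l r n "[]" "[]"] cls_eq_general by auto

lemma TVB_carrier: "carrier (TVB n) = cls n ` words n"
proof -
  have "carrier (TVB n) = words n // tvb_eq n" by (simp add: TVB_def)
  also have "\<dots> = cls n ` words n" unfolding quotient_def cls_def by blast
  finally show ?thesis .
qed

lemma TVB_one: "\<one>\<^bsub>TVB n\<^esub> = cls n []"
  unfolding TVB_def by simp

lemma TVB_mult: "u \<in> words n \<Longrightarrow> v \<in> words n \<Longrightarrow> cls n u \<otimes>\<^bsub>TVB n\<^esub> cls n v = cls n (u@v)"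
proof -
  assume u: "u \<in> words n" and v: "v \<in> words n"
  have "\<And>a b. a \<in> cls n u \<Longrightarrow> b \<in> cls n v \<Longrightarrow> cls n (a@b) = cls n (u@v)"
    by (metis cls_ctx2 cls_eq_iff cls_mem u v)
  moreover have "u \<in> cls n u" "v \<in> cls n v" using u v cls_self by auto
  ultimately have "(\<Union>a\<in>cls n u. \<Union>b\<in>cls n v. cls n (a@b)) = cls n (u@v)" by blast
  then show ?thesis by (simp add: TVB_def)
qed

definition invw :: "word \<Rightarrow> word" where "invw u = rev (map inv_letter u)"

lemma invw_words[simp]: "invw u \<in> words n \<longleftrightarrow> u \<in> words n"
  by (auto simp: invw_def words_def inv_letter_def)

lemma invw_append[simp]: "invw (u@v) = invw v @ invw u"
  by (simp add: invw_def)

lemma invw_Nil[simp]: "invw [] = []" by (simp add: invw_def)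

lemma invw_inv: "u \<in> words n \<Longrightarrow> cls n (invw u @ u) = cls n []"
proof (induction u)
  case Nil then show ?case by simp
next
  case (Cons x u)
  have r: "cls n [inv_letter x, x] = cls n []"
    using cls_rel[of "[inv_letter x, inv_letter (inv_letter x)]" "[]" n] Cons.prems
    by (auto simp: tvb_rels_def inv_letter_def)
  have "cls n (invw (x#u) @ x # u) = cls n (invw u @ [inv_letter x, x] @ u)"
    by (simp add: invw_def)
  also have "\<dots> = cls n (invw u @ [] @ u)" using r Cons.prems by (intro cls_ctx) auto
  finally show ?case using Cons by simp
qed

lemma group_TVB: "group (TVB n)"
proof (rule groupI)
  fix x y assume "x \<in> carrier (TVB n)" "y \<in> carrier (TVB n)"
  then show "x \<otimes>\<^bsub>TVB n\<^esub> y \<in> carrier (TVB n)" unfolding TVB_carrier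
    using TVB_mult by auto
next
  show "\<one>\<^bsub>TVB n\<^esub> \<in> carrier (TVB n)" unfolding TVB_carrier TVB_one by auto
next
  fix x y z assume "x \<in> carrier (TVB n)" "y \<in> carrier (TVB n)" "z \<in> carrier (TVB n)"
  then show "x \<otimes>\<^bsub>TVB n\<^esub> y \<otimes>\<^bsub>TVB n\<^esub> z = x \<otimes>\<^bsub>TVB n\<^esub> (y \<otimes>\<^bsub>TVB n\<^esub> z)"
    unfolding TVB_carrier using TVB_mult by auto
next
  fix x assume "x \<in> carrier (TVB n)"
  then show "\<one>\<^bsub>TVB n\<^esub> \<otimes>\<^bsub>TVB n\<^esub> x = x"
    unfolding TVB_carrier TVB_one using TVB_mult by auto
next
  fix x assume "x \<in> carrier (TVB n)"
  then obtain u where u: "u \<in> words n" "x = cls n u" unfolding TVB_carrier by auto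
  then show "\<exists>y\<in>carrier (TVB n). y \<otimes>\<^bsub>TVB n\<^esub> x = \<one>\<^bsub>TVB n\<^esub>"
    using invw_inv[OF u(1)] TVB_mult[of "invw u" n u] unfolding TVB_carrier TVB_one
    by (intro bexI[of _ "cls n (invw u)"]) auto
qed

lemma cls_carrier: "u \<in> words n \<Longrightarrow> cls n u \<in> carrier (TVB n)"
  unfolding TVB_carrier by auto

lemma TVB_inv: "u \<in> words n \<Longrightarrow> inv\<^bsub>TVB n\<^esub> (cls n u) = cls n (invw u)"
proof -
  assume u: "u \<in> words n"
  interpret G: group "TVB n" by (rule group_TVB)
  show ?thesis
    by (rule G.inv_equality) (use u invw_inv TVB_mult cls_carrier TVB_one in auto)
qed


fun genf :: "gen \<Rightarrow> nat \<times> bool \<Rightarrow> nat \<times> bool" where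
  "genf (Sg i) = id"
| "genf (Rg i) = (\<lambda>(j,b). (Transposition.transpose i (i+1) j, b))"
| "genf (Gg k) = (\<lambda>(j,b). if j = k then (j, \<not> b) else (j, b))"

definition F :: "word \<Rightarrow> nat \<times> bool \<Rightarrow> nat \<times> bool" where
  "F w = foldr (\<lambda>x f. genf (fst x) \<circ> f) w id"

lemma F_Nil[simp]: "F [] = id" by (simp add: F_def)
lemma F_Cons[simp]: "F (x#w) = genf (fst x) \<circ> F w" by (simp add: F_def)
lemma F_append[simp]: "F (u@v) = F u \<circ> F v"
  by (induction u) auto

lemma genf_invol: "genf g \<circ> genf g = id"
  by (cases g) (auto simp: transpose_def fun_eq_iff)

lemma t1: "transpose i (Suc i) (transpose (Suc i) (Suc (Suc i)) (transpose i (Suc i) j)) = transpose (Suc i) (Suc (Suc i)) (transpose i (Suc i) (transpose (Suc i) (Suc (Suc i)) j))"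
  by (simp add: transpose_def)
lemma t2: "i + 2 \<le> k \<or> k + 2 \<le> i \<Longrightarrow> transpose i (Suc i) (transpose k (Suc k) j) = transpose k (Suc k) (transpose i (Suc i) j)"
  by (auto simp add: transpose_def)
lemma t3: "j \<noteq> i \<Longrightarrow> j \<noteq> Suc i \<Longrightarrow> (transpose i (Suc i) k = j) = (k = j)"
  by (auto simp add: transpose_def)
lemma genf_invol_pt: "genf g (genf g x) = x"
  using genf_invol[of g] by (metis comp_apply id_apply)

lemma F_rel: "(l,r) \<in> tvb_rels n \<Longrightarrow> F l = F r"
  unfolding tvb_rels_def
  apply (elim UnE)
  subgoal by (clarsimp simp: inv_letter_def fun_eq_iff genf_invol_pt)
  subgoal by (clarsimp simp: fun_eq_iff)
  subgoal by (clarsimp simp: fun_eq_iff)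
  subgoal by (clarsimp simp: fun_eq_iff genf_invol_pt)
  subgoal by (clarsimp simp: fun_eq_iff) (auto simp: transpose_def)
  subgoal by (clarsimp simp: fun_eq_iff t1)
  subgoal by (clarsimp simp: fun_eq_iff)
  subgoal by (clarsimp simp: fun_eq_iff)
  subgoal by (clarsimp simp: fun_eq_iff genf_invol_pt)
  subgoal by (clarsimp simp: fun_eq_iff)
  subgoal by (clarsimp simp: fun_eq_iff t3)
  subgoal by (clarsimp simp: fun_eq_iff)
  subgoal by (clarsimp simp: fun_eq_iff transpose_def)
  subgoal by (clarsimp simp: fun_eq_iff transpose_def)
  done

lemma F_eq: "(u,v) \<in> tvb_eq n \<Longrightarrow> F u = F v"
  by (induction rule: tvb_eq.induct) (auto dest: F_rel)

lemma F_cls: "u \<in> words n \<Longrightarrow> cls n u = cls n v \<Longrightarrow> F u = F v"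
  using cls_eq_iff F_eq by blast

lemma word_perm_Nil[simp]: "word_perm [] = id" by (simp add: word_perm_def)
lemma word_perm_Cons: "word_perm (x#w) = (case fst x of Rg i \<Rightarrow> Transposition.transpose i (i+1) \<circ> word_perm w | _ \<Rightarrow> word_perm w)"
  unfolding word_perm_def by simp

lemma F_fst: "fst (F w (j,b)) = word_perm w j"
proof (induction w arbitrary: j b)
  case Nil then show ?case by simp
next
  case (Cons x w)
  obtain j' b' where jb: "F w (j,b) = (j',b')" by fastforce
  then have "j' = word_perm w j" using Cons[of j b] by simp
  then show ?case using jb by (cases "fst x") (auto simp: word_perm_Cons)
qed

lemma F_snd: "snd (F w (j,b)) = (b \<noteq> snd (F w (j,False)))"
proof (induction w arbitrary: j b)
  case Nil then show ?case by simp
next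
  case (Cons x w)
  obtain j' b' where jb: "F w (j,b) = (j',b')" by fastforce
  obtain j'' b'' where jb2: "F w (j,False) = (j'',b'')" by fastforce
  have "j' = j''" using F_fst[of w j b] F_fst[of w j False] jb jb2 by simp
  moreover have "b' = (b \<noteq> b'')" using Cons[of j b] jb jb2 by simp
  ultimately show ?case using jb jb2 by (cases "fst x") auto
qed

definition flipv :: "word \<Rightarrow> nat \<Rightarrow> bool" where
  "flipv w j = snd (F w (j, False))"

lemma F_char: "F w (j,b) = (word_perm w j, b \<noteq> flipv w j)"
  using F_fst[of w j b] F_snd[of w j b] unfolding flipv_def by (simp add: prod_eq_iff)

lemma word_perm_cls: "u \<in> words n \<Longrightarrow> cls n u = cls n v \<Longrightarrow> word_perm u = word_perm v"
proof -
  assume "u \<in> words n" "cls n u = cls n v"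
  then have "F u = F v" by (rule F_cls)
  then show ?thesis using F_fst[of u _ False] F_fst[of v _ False] by (auto simp: fun_eq_iff)
qed

lemma flipv_cls: "u \<in> words n \<Longrightarrow> cls n u = cls n v \<Longrightarrow> flipv u = flipv v"
  using F_cls[of u n v] unfolding flipv_def by auto

lemma word_perm_append[simp]: "word_perm (u@v) = word_perm u \<circ> word_perm v"
  by (induction u) (auto simp: word_perm_Cons split: gen.split)

lemma cls_some: "u \<in> words n \<Longrightarrow> (SOME w. w \<in> cls n u) \<in> words n \<and> cls n (SOME w. w \<in> cls n u) = cls n u"
proof -
  assume u: "u \<in> words n"
  then have "(SOME w. w \<in> cls n u) \<in> cls n u" using cls_self by (metis someI)
  then have "(u, SOME w. w \<in> cls n u) \<in> tvb_eq n" using cls_mem by blast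
  then show ?thesis using u tvb_eq_words cls_eq_iff by metis
qed

lemma phiH_cls: "u \<in> words n \<Longrightarrow> phiH (cls n u) = word_perm u"
  unfolding phiH_def using cls_some word_perm_cls by metis

lemma TVH_set_eq: "TVH_set n = {cls n w | w. w \<in> words n \<and> word_perm w = id}"
proof -
  have "TVH_set n = {x. x \<in> cls n ` words n \<and> phiH x = id}"
    unfolding TVH_set_def kernel_def TVB_carrier by (simp add: sym_group_def)
  also have "\<dots> = {cls n w | w. w \<in> words n \<and> word_perm w = id}"
    by (auto simp: phiH_cls)
  finally show ?thesis .
qed

lemma word_perm_invw: "u \<in> words n \<Longrightarrow> word_perm u = id \<Longrightarrow> word_perm (invw u) = id"
proof -
  assume u: "u \<in> words n" "word_perm u = id"
  have "word_perm (invw u @ u) = word_perm []"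
    by (rule word_perm_cls[of _ n]) (use u invw_inv in auto)
  then show ?thesis using u by simp
qed

lemma TVH_memI: "w \<in> words n \<Longrightarrow> word_perm w = id \<Longrightarrow> cls n w \<in> TVH_set n"
  unfolding TVH_set_eq by blast

lemma TVH_memE: "a \<in> TVH_set n \<Longrightarrow> (\<And>w. w \<in> words n \<Longrightarrow> word_perm w = id \<Longrightarrow> a = cls n w \<Longrightarrow> P) \<Longrightarrow> P"
  unfolding TVH_set_eq by blast

lemma TVH_subgroup: "subgroup (TVH_set n) (TVB n)"
proof -
  interpret G: group "TVB n" by (rule group_TVB)
  show ?thesis
  proof (rule G.subgroupI)
    show "TVH_set n \<subseteq> carrier (TVB n)" unfolding TVB_carrier by (auto elim: TVH_memE)
    show "TVH_set n \<noteq> {}" using TVH_memI[of "[]" n] by auto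
  next
    fix a assume "a \<in> TVH_set n"
    then obtain w where w: "w \<in> words n" "word_perm w = id" "a = cls n w" by (rule TVH_memE)
    then have "inv\<^bsub>TVB n\<^esub> a = cls n (invw w)" using TVB_inv by simp
    then show "inv\<^bsub>TVB n\<^esub> a \<in> TVH_set n"
      using TVH_memI[of "invw w" n] word_perm_invw[OF w(1,2)] w(1) by simp
  next
    fix a b assume "a \<in> TVH_set n" "b \<in> TVH_set n"
    then obtain v w where w: "w \<in> words n" "word_perm w = id" "a = cls n w"
      and v: "v \<in> words n" "word_perm v = id" "b = cls n v" by (metis TVH_memE)
    then have "a \<otimes>\<^bsub>TVB n\<^esub> b = cls n (w@v)" using TVB_mult by simp
    then show "a \<otimes>\<^bsub>TVB n\<^esub> b \<in> TVH_set n"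
      using TVH_memI[of "w@v" n] w v by simp
  qed
qed

lemma group_TVH: "group (TVH n)"
  unfolding TVH_def using group.subgroup_imp_group[OF group_TVB TVH_subgroup] .


lemma R_rr: "1 \<le> i \<Longrightarrow> i < n \<Longrightarrow> cls n (rw i @ rw i) = cls n []"
  by (rule cls_rel, unfold tvb_rels_def, (simp; linarith))
lemma R_gg: "1 \<le> j \<Longrightarrow> j \<le> n \<Longrightarrow> cls n (gw j @ gw j) = cls n []"
  by (rule cls_rel, unfold tvb_rels_def, (simp; linarith))
lemma R_rfar: "1 \<le> i \<Longrightarrow> i < n \<Longrightarrow> 1 \<le> j \<Longrightarrow> j < n \<Longrightarrow> i + 2 \<le> j \<or> j + 2 \<le> i \<Longrightarrow> cls n (rw i @ rw j) = cls n (rw j @ rw i)"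
  by (rule cls_rel, unfold tvb_rels_def, (simp; linarith))
lemma R_rbraid: "1 \<le> i \<Longrightarrow> Suc i < n \<Longrightarrow> cls n (rw i @ rw (Suc i) @ rw i) = cls n (rw (Suc i) @ rw i @ rw (Suc i))"
  by (rule cls_rel, unfold tvb_rels_def, (simp; linarith))
lemma R_srfar: "1 \<le> i \<Longrightarrow> i < n \<Longrightarrow> 1 \<le> j \<Longrightarrow> j < n \<Longrightarrow> i + 2 \<le> j \<or> j + 2 \<le> i \<Longrightarrow> cls n (sw i @ rw j) = cls n (rw j @ sw i)"
  by (rule cls_rel, unfold tvb_rels_def, (simp; linarith))
lemma R_rrs: "1 \<le> i \<Longrightarrow> Suc i < n \<Longrightarrow> cls n (rw i @ rw (Suc i) @ sw i) = cls n (sw (Suc i) @ rw i @ rw (Suc i))"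
  by (rule cls_rel, unfold tvb_rels_def, (simp; linarith))
lemma R_gcomm: "1 \<le> i \<Longrightarrow> i \<le> n \<Longrightarrow> 1 \<le> j \<Longrightarrow> j \<le> n \<Longrightarrow> cls n (gw i @ gw j) = cls n (gw j @ gw i)"
  by (rule cls_rel, unfold tvb_rels_def, (simp; linarith))
lemma R_gr: "1 \<le> i \<Longrightarrow> i < n \<Longrightarrow> 1 \<le> j \<Longrightarrow> j \<le> n \<Longrightarrow> j \<noteq> i \<Longrightarrow> j \<noteq> Suc i \<Longrightarrow> cls n (gw j @ rw i) = cls n (rw i @ gw j)"
  by (rule cls_rel, unfold tvb_rels_def, (simp; linarith))
lemma R_gs: "1 \<le> i \<Longrightarrow> i < n \<Longrightarrow> 1 \<le> j \<Longrightarrow> j \<le> n \<Longrightarrow> j \<noteq> i \<Longrightarrow> j \<noteq> Suc i \<Longrightarrow> cls n (gw j @ sw i) = cls n (sw i @ gw j)"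
  by (rule cls_rel, unfold tvb_rels_def, (simp; linarith))
lemma R_rg: "1 \<le> i \<Longrightarrow> i < n \<Longrightarrow> cls n (rw i @ gw i) = cls n (gw (Suc i) @ rw i)"
  by (rule cls_rel, unfold tvb_rels_def, (simp; linarith))
lemma R_rsr: "1 \<le> i \<Longrightarrow> i < n \<Longrightarrow> cls n (rw i @ sw i @ rw i) = cls n (gw (Suc i) @ gw i @ sw i @ gw i @ gw (Suc i))"
  by (rule cls_rel, unfold tvb_rels_def, (simp; linarith))


definition rwl :: "nat list \<Rightarrow> word" where "rwl p = map (\<lambda>i. (Rg i, True)) p"
definition pp :: "nat list \<Rightarrow> nat \<Rightarrow> nat" where "pp p = foldr (\<lambda>i f. Transposition.transpose i (Suc i) \<circ> f) p id"
definition vl :: "nat \<Rightarrow> nat list \<Rightarrow> bool" where "vl n p = (\<forall>i\<in>set p. 1 \<le> i \<and> i < n)"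

lemma rwl_Nil[simp]: "rwl [] = []" by (simp add: rwl_def)
lemma rwl_Cons[simp]: "rwl (i#p) = rw i @ rwl p" by (simp add: rwl_def)
lemma rwl_append[simp]: "rwl (p@q) = rwl p @ rwl q" by (simp add: rwl_def)
lemma rwl_words[simp]: "rwl p \<in> words n \<longleftrightarrow> vl n p" by (auto simp: rwl_def vl_def words_def)
lemma vl_simps[simp]: "vl n [] " "vl n (i#p) \<longleftrightarrow> 1 \<le> i \<and> i < n \<and> vl n p" "vl n (p@q) \<longleftrightarrow> vl n p \<and> vl n q"
  by (auto simp: vl_def)
lemma pp_Nil[simp]: "pp [] = id" by (simp add: pp_def)
lemma pp_Cons[simp]: "pp (i#p) = Transposition.transpose i (Suc i) \<circ> pp p" by (simp add: pp_def)
lemma pp_append[simp]: "pp (p@q) = pp p \<circ> pp q" by (induction p) auto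
lemma word_perm_rwl[simp]: "word_perm (rwl p) = pp p"
  by (induction p) (auto simp: word_perm_Cons)

lemma valid_gen_simps[simp]: "valid_gen n (Rg i) = (1 \<le> i \<and> i < n)" "valid_gen n (Sg i) = (1 \<le> i \<and> i < n)"
  "valid_gen n (Gg i) = (1 \<le> i \<and> i \<le> n)" by auto
declare valid_gen.simps[simp del]

lemma words_rw[simp]: "rw i \<in> words n \<longleftrightarrow> 1 \<le> i \<and> i < n" by auto
lemma words_sw[simp]: "sw i \<in> words n \<longleftrightarrow> 1 \<le> i \<and> i < n" by auto
lemma words_gw[simp]: "gw i \<in> words n \<longleftrightarrow> 1 \<le> i \<and> i \<le> n" by auto

lemma cls_ctxR: "cls n u = cls n v \<Longrightarrow> b \<in> words n \<Longrightarrow> cls n (u @ b) = cls n (v @ b)"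
  using cls_ctx[of n u v "[]" b] by simp
lemma cls_ctxL: "cls n u = cls n v \<Longrightarrow> a \<in> words n \<Longrightarrow> cls n (a @ u) = cls n (a @ v)"
  using cls_ctx[of n u v a "[]"] by simp

lemma rwl_comm:
  assumes "\<forall>i\<in>set q. j+2 \<le> i \<or> i+2 \<le> j" "vl n q" "1 \<le> j" "j < n"
  shows "cls n (rwl q @ rw j) = cls n (rw j @ rwl q)"
  using assms
proof (induction q)
  case Nil then show ?case by simp
next
  case (Cons i q)
  have "cls n (rwl (i#q) @ rw j) = cls n (rw i @ (rwl q @ rw j))" by simp
  also have "\<dots> = cls n (rw i @ (rw j @ rwl q))"
    using Cons by (intro cls_ctxL) auto
  also have "\<dots> = cls n ((rw i @ rw j) @ rwl q)" by simp
  also have "\<dots> = cls n ((rw j @ rw i) @ rwl q)"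
    using Cons by (intro cls_ctxR R_rfar) auto
  finally show ?case by simp
qed

definition chain :: "nat \<Rightarrow> nat \<Rightarrow> nat list" where "chain m k = rev [k..<Suc m]"

lemma pp_chain: "k \<le> Suc m \<Longrightarrow> pp (chain m k) k = Suc m"
proof (induction m)
  case 0 then show ?case by (cases k) (auto simp: chain_def transpose_def)
next
  case (Suc m)
  show ?case
  proof (cases "k = Suc (Suc m)")
    case True then show ?thesis by (simp add: chain_def)
  next
    case False
    then have "chain (Suc m) k = Suc m # chain m k" using Suc.prems by (simp add: chain_def)
    then show ?thesis using Suc False by (simp add: transpose_def)
  qed
qed

lemma pp_fix: "\<forall>i\<in>set p. x \<noteq> i \<and> x \<noteq> Suc i \<Longrightarrow> pp p x = x"
  by (induction p) (auto simp: transpose_def)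

lemma decomp:
  assumes "vl n p" "\<forall>i\<in>set p. i \<le> m" "m < n"
  shows "\<exists>p' k. vl n p' \<and> (\<forall>i\<in>set p'. i < m) \<and> 1 \<le> k \<and> k \<le> Suc m \<and>
           cls n (rwl p) = cls n (rwl (p' @ chain m k))"
  using assms
proof (induction p rule: rev_induct)
  case Nil
  show ?case by (intro exI[of _ "[]"] exI[of _ "Suc m"]) (simp add: chain_def)
next
  case (snoc j p)
  then obtain p' k where IH: "vl n p'" "\<forall>i\<in>set p'. i < m" "1 \<le> k" "k \<le> Suc m"
    "cls n (rwl p) = cls n (rwl (p' @ chain m k))" by auto
  have j: "1 \<le> j" "j \<le> m" "j < n" using snoc.prems by auto
  have vc: "vl n (chain m k)" using IH(3) snoc.prems by (auto simp: vl_def chain_def)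
  have step: "cls n (rwl (p @ [j])) = cls n (rwl (p' @ chain m k) @ rw j)"
    using IH(5) j by (simp add: cls_ctxR)
  consider "j + 1 < k" | "j + 1 = k" | "j = k" | "k < j" by linarith
  then show ?case
  proof cases
    case 1
    have "cls n (rwl (p' @ chain m k) @ rw j) = cls n (rwl p' @ (rwl (chain m k) @ rw j))" by simp
    also have "\<dots> = cls n (rwl p' @ (rw j @ rwl (chain m k)))"
      using 1 j vc IH by (intro cls_ctxL rwl_comm) (auto simp: chain_def)
    finally have "cls n (rwl (p@[j])) = cls n (rwl ((p'@[j]) @ chain m k))" using step by simp
    then show ?thesis using IH j 1 by (intro exI[of _ "p'@[j]"] exI[of _ k]) auto
  next
    case 2
    have "chain m k @ [j] = chain m j" using 2 IH(4) unfolding chain_def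
      by (simp add: upt_conv_Cons)
    then have "cls n (rwl (p@[j])) = cls n (rwl (p' @ chain m j))" using step
      by (metis rwl_Cons rwl_Nil rwl_append append_Nil2 append.assoc)
    then show ?thesis using IH j by (intro exI[of _ p'] exI[of _ j]) auto
  next
    case 3
    have ch: "chain m k = chain m (Suc k) @ [k]" using 3 j unfolding chain_def
      by (simp add: upt_conv_Cons)
    have vc2: "vl n (chain m (Suc k))" using vc ch by simp
    have "cls n (rwl (p' @ chain m k) @ rw j) = cls n (rwl (p' @ chain m (Suc k)) @ (rw k @ rw k) @ [])"
      using ch 3 by simp
    also have "\<dots> = cls n (rwl (p' @ chain m (Suc k)) @ [] @ [])"
      using 3 j IH vc2 by (intro cls_ctx R_rr) auto
    finally have "cls n (rwl (p@[j])) = cls n (rwl (p' @ chain m (Suc k)))" using step by simp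
    then show ?thesis using IH j 3 by (intro exI[of _ p'] exI[of _ "Suc k"]) auto
  next
    case 4
    define t where "t = j - 2"
    have t: "j = Suc (Suc t)" using 4 IH(3) unfolding t_def by simp
    have kt: "k \<le> Suc t" using 4 t by simp
    have ch: "chain m k = chain m (Suc j) @ [j, Suc t] @ rev [k..<Suc t]"
    proof -
      have "[k..<Suc m] = [k..<Suc t] @ [Suc t..<Suc m]" using kt j t
        using upt_add_eq_append[of k "Suc t" "Suc m - Suc t"] by simp
      also have "[Suc t..<Suc m] = Suc t # j # [Suc j..<Suc m]" using j t by (simp add: upt_conv_Cons)
      finally show ?thesis unfolding chain_def by simp
    qed
    define A where "A = rwl (chain m (Suc j))"
    define B where "B = rwl (rev [k..<Suc t])"
    have vA: "A \<in> words n" using vc ch unfolding A_def by simp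
    have vB: "B \<in> words n" using vc ch unfolding B_def by simp
    have vp': "rwl p' \<in> words n" using IH by simp
    have "cls n (rwl (p' @ chain m k) @ rw j) = cls n (rwl p' @ A @ rw j @ rw (Suc t) @ (B @ rw j))"
      using ch unfolding A_def B_def by simp
    also have "\<dots> = cls n (rwl p' @ A @ rw j @ rw (Suc t) @ (rw j @ B))"
      using vp' vA j t IH(3) unfolding B_def
      by (intro cls_ctxL rwl_comm) (auto simp: vl_def)
    also have "\<dots> = cls n ((rwl p' @ A) @ (rw (Suc t) @ rw (Suc (Suc t)) @ rw (Suc t)) @ B)"
    proof -
      have br: "cls n (rw (Suc (Suc t)) @ rw (Suc t) @ rw (Suc (Suc t))) = cls n (rw (Suc t) @ rw (Suc (Suc t)) @ rw (Suc t))"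
        using R_rbraid[of "Suc t" n] j t by simp
      show ?thesis using cls_ctx[OF br, of "rwl p' @ A" B] vp' vA vB t by simp
    qed
    also have "\<dots> = cls n (rwl p' @ (A @ rw (Suc t)) @ rw j @ rw (Suc t) @ B)" using t by simp
    also have "\<dots> = cls n (rwl p' @ (rw (Suc t) @ A) @ rw j @ rw (Suc t) @ B)"
      using vp' vB j t snoc.prems(3) unfolding A_def
      by (intro cls_ctx rwl_comm) (auto simp: vl_def chain_def)
    finally have "cls n (rwl (p@[j])) = cls n (rwl ((p' @ [Suc t]) @ chain m k))"
      using step ch unfolding A_def B_def by simp
    then show ?thesis using IH j t by (intro exI[of _ "p'@[Suc t]"] exI[of _ k]) auto
  qed
qed

lemma coxeter_aux:
  "m < n \<Longrightarrow> vl n p \<Longrightarrow> \<forall>i\<in>set p. i \<le> m \<Longrightarrow> pp p = id \<Longrightarrow> cls n (rwl p) = cls n []"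
proof (induction m arbitrary: p)
  case 0
  then have "p = []" by (cases p) (auto)
  then show ?case by simp
next
  case (Suc m)
  obtain p' k where d: "vl n p'" "\<forall>i\<in>set p'. i < Suc m" "1 \<le> k" "k \<le> Suc (Suc m)"
    "cls n (rwl p) = cls n (rwl (p' @ chain (Suc m) k))"
    using decomp[OF Suc.prems(2,3,1)] by blast
  have "pp p = pp (p' @ chain (Suc m) k)"
    using word_perm_cls[OF _ d(5)] Suc.prems by simp
  then have "pp p' (pp (chain (Suc m) k) k) = k" using Suc.prems by (metis comp_apply id_apply pp_append)
  then have "pp p' (Suc (Suc m)) = k" using pp_chain[OF d(4)] by simp
  moreover have "pp p' (Suc (Suc m)) = Suc (Suc m)" using d(2) by (intro pp_fix) auto
  ultimately have k: "k = Suc (Suc m)" by simp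
  then have "chain (Suc m) k = []" by (simp add: chain_def)
  then have "cls n (rwl p) = cls n (rwl p')" "pp p' = id" using d(5) \<open>pp p = pp (p' @ chain (Suc m) k)\<close> Suc.prems
    by (auto simp: id_def)
  moreover have "cls n (rwl p') = cls n []" by (rule Suc.IH) (use Suc.prems d \<open>pp p' = id\<close> in auto)
  ultimately show ?case by simp
qed

lemma coxeter: "vl n p \<Longrightarrow> pp p = id \<Longrightarrow> cls n (rwl p) = cls n []"
proof (cases n)
  case 0
  assume "vl n p" then have "p = []" using 0 by (cases p) auto
  then show ?thesis by simp
next
  case (Suc n')
  assume "vl n p" "pp p = id"
  then show ?thesis by (intro coxeter_aux[of "n - 1" n p]) (use Suc in \<open>auto simp: vl_def\<close>)
qed


lemma R_canc: "valid_gen n g \<Longrightarrow> cls n [(g,b), (g, \<not> b)] = cls n []"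
  by (rule cls_rel, unfold tvb_rels_def, simp add: inv_letter_def)

lemma inv_letter_eq:
  assumes "valid_gen n g" "cls n [(g,True),(g,True)] = cls n []"
  shows "cls n [(g,False)] = cls n [(g,True)]"
proof -
  have "cls n [(g,False)] = cls n ([(g,False)] @ [(g,True),(g,True)])"
    using cls_ctxL[OF assms(2), of "[(g,False)]"] assms(1) by simp
  also have "\<dots> = cls n ([(g,False),(g,True)] @ [(g,True)])" by simp
  also have "\<dots> = cls n ([] @ [(g,True)])"
    using cls_ctxR[OF R_canc[OF assms(1), of False], of "[(g,True)]"] assms(1) by simp
  finally show ?thesis by simp
qed

lemma rinv: "1 \<le> i \<Longrightarrow> i < n \<Longrightarrow> cls n [(Rg i,False)] = cls n (rw i)"
  using inv_letter_eq[of n "Rg i"] R_rr[of i n] by simp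
lemma ginv: "1 \<le> i \<Longrightarrow> i \<le> n \<Longrightarrow> cls n [(Gg i,False)] = cls n (gw i)"
  using inv_letter_eq[of n "Gg i"] R_gg[of i n] by simp

lemma R_rg2: "1 \<le> i \<Longrightarrow> i < n \<Longrightarrow> cls n (rw i @ gw (Suc i)) = cls n (gw i @ rw i)"
proof -
  assume i: "1 \<le> i" "i < n"
  have "cls n (rw i @ gw (Suc i)) = cls n (rw i @ gw (Suc i) @ (rw i @ rw i))"
    using cls_ctxL[OF R_rr[OF i, symmetric], of "rw i @ gw (Suc i)"] i by simp
  also have "\<dots> = cls n (rw i @ (gw (Suc i) @ rw i) @ rw i)" by simp
  also have "\<dots> = cls n (rw i @ (rw i @ gw i) @ rw i)"
    using cls_ctx[OF R_rg[OF i, symmetric], of "rw i" "rw i"] i by simp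
  also have "\<dots> = cls n ((rw i @ rw i) @ gw i @ rw i)" by simp
  also have "\<dots> = cls n ([] @ gw i @ rw i)"
    using cls_ctxR[OF R_rr[OF i], of "gw i @ rw i"] i by simp
  finally show ?thesis by simp
qed

lemma rho_gamma:
  assumes "1 \<le> m" "m < n" "1 \<le> j" "j \<le> n"
  shows "cls n (rw m @ gw j) = cls n (gw (Transposition.transpose m (Suc m) j) @ rw m)"
proof -
  consider "j = m" | "j = Suc m" | "j \<noteq> m" "j \<noteq> Suc m" by blast
  then show ?thesis
  proof cases
    case 1 then show ?thesis using R_rg[of m n] assms by simp
  next
    case 2 then show ?thesis using R_rg2[of m n] assms by simp
  next
    case 3 then show ?thesis using R_gr[of m n j] assms by (simp add: transpose_def)
  qed
qed

lemma pp_range: "vl n p \<Longrightarrow> 1 \<le> j \<Longrightarrow> j \<le> n \<Longrightarrow> 1 \<le> pp p j \<and> pp p j \<le> n"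
  by (induction p arbitrary: j) (auto simp: transpose_def)

lemma rwl_gamma: "vl n p \<Longrightarrow> 1 \<le> j \<Longrightarrow> j \<le> n \<Longrightarrow> cls n (rwl p @ gw j) = cls n (gw (pp p j) @ rwl p)"
proof (induction p arbitrary: j)
  case Nil then show ?case by simp
next
  case (Cons i p)
  have r: "1 \<le> pp p j \<and> pp p j \<le> n" using pp_range Cons.prems by auto
  have "cls n (rwl (i#p) @ gw j) = cls n (rw i @ (rwl p @ gw j))" by simp
  also have "\<dots> = cls n (rw i @ (gw (pp p j) @ rwl p))"
    using Cons by (intro cls_ctxL) auto
  also have "\<dots> = cls n ((rw i @ gw (pp p j)) @ rwl p)" by simp
  also have "\<dots> = cls n ((gw (pp (i#p) j) @ rw i) @ rwl p)"
  proof -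
    have rg: "cls n (rw i @ gw (pp p j)) = cls n (gw (pp (i#p) j) @ rw i)"
      using rho_gamma[of i n "pp p j"] Cons.prems r by simp
    show ?thesis by (rule cls_ctxR[OF rg]) (use Cons.prems in simp)
  qed
  finally show ?case by simp
qed

definition gwl :: "(nat \<Rightarrow> bool) \<Rightarrow> nat list \<Rightarrow> word" where
  "gwl a L = concat (map (\<lambda>j. if a j then gw j else []) L)"
definition gword :: "nat \<Rightarrow> (nat \<Rightarrow> bool) \<Rightarrow> word" where
  "gword n a = gwl a [1..<Suc n]"

lemma gwl_Nil[simp]: "gwl a [] = []" by (simp add: gwl_def)
lemma gwl_snoc[simp]: "gwl a (L@[k]) = gwl a L @ (if a k then gw k else [])" by (simp add: gwl_def)
lemma gwl_Cons[simp]: "gwl a (k#L) = (if a k then gw k else []) @ gwl a L" by (simp add: gwl_def)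
lemma gwl_words: "\<forall>j\<in>set L. 1 \<le> j \<and> j \<le> n \<Longrightarrow> gwl a L \<in> words n"
  by (induction L) auto
lemma gword_words[simp]: "gword n a \<in> words n"
  unfolding gword_def by (rule gwl_words) auto
lemma gwl_cong: "\<forall>j\<in>set L. a j = b j \<Longrightarrow> gwl a L = gwl b L"
  by (induction L) auto

lemma gw_gwl_comm: "\<forall>i\<in>set L. 1 \<le> i \<and> i \<le> n \<Longrightarrow> 1 \<le> j \<Longrightarrow> j \<le> n \<Longrightarrow>
   cls n (gwl a L @ gw j) = cls n (gw j @ gwl a L)"
proof (induction L rule: rev_induct)
  case Nil then show ?case by simp
next
  case (snoc k L)
  have w: "gwl a L \<in> words n" using snoc.prems by (intro gwl_words) auto
  show ?case
  proof (cases "a k")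
    case True
    have "cls n (gwl a (L@[k]) @ gw j) = cls n (gwl a L @ (gw k @ gw j))" using True by simp
    also have "\<dots> = cls n (gwl a L @ (gw j @ gw k))"
      using snoc.prems w by (intro cls_ctxL R_gcomm) auto
    also have "\<dots> = cls n ((gwl a L @ gw j) @ gw k)" by simp
    also have "\<dots> = cls n ((gw j @ gwl a L) @ gw k)"
      using snoc by (intro cls_ctxR) auto
    finally show ?thesis using True by simp
  next
    case False then show ?thesis using snoc by simp
  qed
qed

lemma gwl_toggle:
  "distinct L \<Longrightarrow> \<forall>i\<in>set L. 1 \<le> i \<and> i \<le> n \<Longrightarrow> j \<in> set L \<Longrightarrow>
   cls n (gwl a L @ gw j) = cls n (gwl (a(j := \<not> a j)) L)"
proof (induction L rule: rev_induct)
  case Nil then show ?case by simp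
next
  case (snoc k L)
  have w: "gwl a L \<in> words n" using snoc.prems by (intro gwl_words) auto
  have j: "1 \<le> j" "j \<le> n" using snoc.prems by auto
  define a' where "a' = a(j := \<not> a j)"
  have main: "cls n (gwl a (L@[k]) @ gw j) = cls n (gwl a' (L@[k]))"
  proof (cases "k = j")
    case True
    then have jL: "j \<notin> set L" using snoc.prems by auto
    then have eq: "gwl a' L = gwl a L" unfolding a'_def by (intro gwl_cong) auto
    show ?thesis
    proof (cases "a j")
      case True
      have "cls n (gwl a (L@[k]) @ gw j) = cls n (gwl a L @ (gw j @ gw j))" using True \<open>k = j\<close> by simp
      also have "\<dots> = cls n (gwl a L @ [])" using w j by (intro cls_ctxL R_gg) auto
      also have "gwl a L @ [] = gwl a' (L@[k])" using eq True \<open>k = j\<close> unfolding a'_def by simp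
      finally show ?thesis .
    next
      case False
      have "gwl a (L@[k]) @ gw j = gwl a' (L@[k])" using eq False \<open>k = j\<close> unfolding a'_def by simp
      then show ?thesis by simp
    qed
  next
    case False
    have jL: "j \<in> set L" using snoc.prems False by auto
    have ak: "a' k = a k" using False unfolding a'_def by simp
    define Xk where "Xk = (if a k then gw k else [])"
    have Xk: "Xk \<in> words n" using snoc.prems unfolding Xk_def by auto
    have XXk: "cls n (Xk @ gw j) = cls n (gw j @ Xk)"
      unfolding Xk_def
    proof (cases "a k")
      case True then show "cls n ((if a k then gw k else []) @ gw j) = cls n (gw j @ (if a k then gw k else []))"
        using R_gcomm[of k n j] snoc.prems j by simp
    qed simp
    have "cls n (gwl a (L@[k]) @ gw j) = cls n (gwl a L @ (Xk @ gw j))" unfolding Xk_def by simp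
    also have "\<dots> = cls n (gwl a L @ (gw j @ Xk))" using w XXk by (intro cls_ctxL) auto
    also have "\<dots> = cls n ((gwl a L @ gw j) @ Xk)" by simp
    also have "\<dots> = cls n (gwl a' L @ Xk)"
    proof -
      have ih: "cls n (gwl a L @ gw j) = cls n (gwl a' L)" unfolding a'_def
        by (rule snoc.IH) (use snoc.prems jL in auto)
      show ?thesis by (rule cls_ctxR[OF ih]) (rule Xk)
    qed
    finally show ?thesis using ak unfolding Xk_def by simp
  qed
  then show ?case unfolding a'_def .
qed

lemma gword_toggle: "1 \<le> j \<Longrightarrow> j \<le> n \<Longrightarrow> cls n (gword n a @ gw j) = cls n (gword n (a(j := \<not> a j)))"
  unfolding gword_def by (rule gwl_toggle) auto

lemma gword_empty: "\<forall>j. 1 \<le> j \<and> j \<le> n \<longrightarrow> \<not> a j \<Longrightarrow> gword n a = []"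
  unfolding gword_def gwl_def by auto

definition Wword :: "word \<Rightarrow> bool" where
  "Wword u = (\<forall>x\<in>set u. case fst x of Sg _ \<Rightarrow> False | _ \<Rightarrow> True)"

lemma Wnormal: "Wword u \<Longrightarrow> u \<in> words n \<Longrightarrow> \<exists>a p. vl n p \<and> cls n u = cls n (gword n a @ rwl p)"
proof (induction u rule: rev_induct)
  case Nil
  show ?case by (intro exI[of _ "\<lambda>_. False"] exI[of _ "[]"]) (simp add: gword_empty)
next
  case (snoc y u)
  then obtain a p where ap: "vl n p" "cls n u = cls n (gword n a @ rwl p)" by (auto simp: Wword_def)
  obtain g s where y: "y = (g,s)" by fastforce
  have vg: "valid_gen n g" using snoc.prems y by auto
  have step: "cls n (u @ [y]) = cls n (gword n a @ rwl p @ [y])"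
    using cls_ctxR[OF ap(2), of "[y]"] snoc.prems by simp
  show ?case
  proof (cases g)
    case (Sg i) then show ?thesis using snoc.prems y by (auto simp: Wword_def)
  next
    case (Rg i)
    then have i: "1 \<le> i" "i < n" using vg by auto
    have "cls n [y] = cls n (rw i)" using y Rg i by (cases s) (auto simp: rinv)
    then have "cls n (gword n a @ rwl p @ [y]) = cls n (gword n a @ rwl p @ rw i)"
      using ap i by (intro cls_ctx[of n "[y]" "rw i" "gword n a @ rwl p" "[]", simplified]) auto
    then show ?thesis using step ap i by (intro exI[of _ a] exI[of _ "p@[i]"]) auto
  next
    case (Gg j)
    then have j: "1 \<le> j" "j \<le> n" using vg by auto
    have "cls n [y] = cls n (gw j)" using y Gg j by (cases s) (auto simp: ginv)
    then have "cls n (gword n a @ rwl p @ [y]) = cls n (gword n a @ (rwl p @ gw j))"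
      using ap j by (intro cls_ctx[of n "[y]" "gw j" "gword n a @ rwl p" "[]", simplified]) auto
    also have "\<dots> = cls n (gword n a @ (gw (pp p j) @ rwl p))"
      using ap j by (intro cls_ctxL rwl_gamma) auto
    also have "\<dots> = cls n ((gword n a @ gw (pp p j)) @ rwl p)" by simp
    also have "\<dots> = cls n (gword n (a(pp p j := \<not> a (pp p j))) @ rwl p)"
      using ap j pp_range[of n p j] by (intro cls_ctxR gword_toggle) auto
    finally show ?thesis using step ap by blast
  qed
qed

lemma F_gwl: "distinct L \<Longrightarrow> F (gwl a L) (j,b) = (j, b \<noteq> (a j \<and> j \<in> set L))"
  by (induction L arbitrary: b) auto

lemma F_rwl: "F (rwl p) (j,b) = (pp p j, b)"
  by (induction p arbitrary: j) auto

lemma F_gword: "F (gword n a) (j,b) = (j, b \<noteq> (a j \<and> 1 \<le> j \<and> j \<le> n))"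
  unfolding gword_def by (subst F_gwl) auto

lemma word_perm_gword[simp]: "word_perm (gword n a) = id"
  using F_gword F_fst by (metis eq_id_iff fst_conv)

lemma flipv_gword: "flipv (gword n a) j = (a j \<and> 1 \<le> j \<and> j \<le> n)"
  unfolding flipv_def F_gword by auto

lemma Wfaithful:
  assumes "Wword u" "u \<in> words n" "word_perm u = id" "\<forall>j. 1 \<le> j \<and> j \<le> n \<longrightarrow> \<not> flipv u j"
  shows "cls n u = cls n []"
proof -
  obtain a p where ap: "vl n p" "cls n u = cls n (gword n a @ rwl p)" using Wnormal assms by blast
  have Fe: "F u = F (gword n a @ rwl p)" using F_cls[OF assms(2) ap(2)] .
  have "word_perm u = word_perm (gword n a @ rwl p)" using word_perm_cls[OF assms(2) ap(2)] .
  then have ppid: "pp p = id" using assms(3) by simp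
  have "\<forall>j. 1 \<le> j \<and> j \<le> n \<longrightarrow> \<not> a j"
  proof (intro allI impI)
    fix j assume j: "1 \<le> j \<and> j \<le> n"
    have "flipv u j = snd (F (gword n a) (F (rwl p) (j, False)))" unfolding flipv_def Fe by simp
    also have "\<dots> = (a j \<and> 1 \<le> j \<and> j \<le> n)" using ppid by (auto simp: F_rwl F_gword)
    finally show "\<not> a j" using assms(4) j by auto
  qed
  then have "gword n a = []" by (rule gword_empty)
  then show ?thesis using ap coxeter[OF ap(1) ppid] by simp
qed


definition farR :: "nat \<Rightarrow> word \<Rightarrow> bool" where
  "farR m w = (\<forall>x\<in>set w. snd x \<and> (case fst x of Rg i \<Rightarrow> (i+2 \<le> m \<or> m+2 \<le> i) | Sg i \<Rightarrow> (i+2 \<le> m \<or> m+2 \<le> i) | Gg _ \<Rightarrow> False))"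
definition farG :: "nat \<Rightarrow> word \<Rightarrow> bool" where
  "farG m w = (\<forall>x\<in>set w. snd x \<and> (case fst x of Rg i \<Rightarrow> m \<noteq> i \<and> m \<noteq> Suc i | Sg i \<Rightarrow> m \<noteq> i \<and> m \<noteq> Suc i | Gg _ \<Rightarrow> False))"

lemma farR_simps[simp]: "farR m []" "farR m (u@v) \<longleftrightarrow> farR m u \<and> farR m v"
  "farR m (rwl p) \<longleftrightarrow> (\<forall>i\<in>set p. i+2 \<le> m \<or> m+2 \<le> i)"
  "farR m (sw i) \<longleftrightarrow> (i+2 \<le> m \<or> m+2 \<le> i)" "farR m (rw i) \<longleftrightarrow> (i+2 \<le> m \<or> m+2 \<le> i)"
  by (auto simp: farR_def rwl_def)
lemma farG_simps[simp]: "farG m []" "farG m (u@v) \<longleftrightarrow> farG m u \<and> farG m v"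
  "farG m (rwl p) \<longleftrightarrow> (\<forall>i\<in>set p. m \<noteq> i \<and> m \<noteq> Suc i)"
  "farG m (sw i) \<longleftrightarrow> (m \<noteq> i \<and> m \<noteq> Suc i)" "farG m (rw i) \<longleftrightarrow> (m \<noteq> i \<and> m \<noteq> Suc i)"
  by (auto simp: farG_def rwl_def)

lemma farR_Cons[simp]: "farR m ((Sg i, b) # w) \<longleftrightarrow> b \<and> (i+2 \<le> m \<or> m+2 \<le> i) \<and> farR m w"
  "farR m ((Rg i, b) # w) \<longleftrightarrow> b \<and> (i+2 \<le> m \<or> m+2 \<le> i) \<and> farR m w"
  "farR m ((Gg i, b) # w) \<longleftrightarrow> False"
  by (auto simp: farR_def)
lemma farG_Cons[simp]: "farG m ((Sg i, b) # w) \<longleftrightarrow> b \<and> m \<noteq> i \<and> m \<noteq> Suc i \<and> farG m w"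
  "farG m ((Rg i, b) # w) \<longleftrightarrow> b \<and> m \<noteq> i \<and> m \<noteq> Suc i \<and> farG m w"
  "farG m ((Gg i, b) # w) \<longleftrightarrow> False"
  by (auto simp: farG_def)

lemma rho_far_word: "1 \<le> m \<Longrightarrow> m < n \<Longrightarrow> w \<in> words n \<Longrightarrow> farR m w \<Longrightarrow> cls n (rw m @ w) = cls n (w @ rw m)"
proof (induction w)
  case Nil then show ?case by simp
next
  case (Cons x w)
  obtain g where x: "x = (g, True)" using Cons.prems by (cases x) (auto simp: farR_def)
  have xw: "farR m w" "w \<in> words n" using Cons.prems by (auto simp: farR_def)
  have c1: "cls n (rw m @ [x]) = cls n ([x] @ rw m)"
  proof (cases g)
    case (Sg i) then show ?thesis using Cons.prems x R_srfar[of i n m] by (auto simp: farR_def)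
  next
    case (Rg i) then show ?thesis using Cons.prems x R_rfar[of i n m] by (auto simp: farR_def)
  next
    case (Gg i) then show ?thesis using Cons.prems x by (auto simp: farR_def)
  qed
  have "cls n (rw m @ x # w) = cls n ((rw m @ [x]) @ w)" by simp
  also have "\<dots> = cls n (([x] @ rw m) @ w)" using c1 xw by (intro cls_ctxR) auto
  also have "\<dots> = cls n ([x] @ (rw m @ w))" by simp
  also have "\<dots> = cls n ([x] @ (w @ rw m))" using Cons xw by (intro cls_ctxL) auto
  finally show ?case by simp
qed

lemma gamma_far_word: "1 \<le> m \<Longrightarrow> m \<le> n \<Longrightarrow> w \<in> words n \<Longrightarrow> farG m w \<Longrightarrow> cls n (gw m @ w) = cls n (w @ gw m)"
proof (induction w)
  case Nil then show ?case by simp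
next
  case (Cons x w)
  obtain g where x: "x = (g, True)" using Cons.prems by (cases x) (auto simp: farG_def)
  have xw: "farG m w" "w \<in> words n" using Cons.prems by (auto simp: farG_def)
  have c1: "cls n (gw m @ [x]) = cls n ([x] @ gw m)"
  proof (cases g)
    case (Sg i) then show ?thesis using Cons.prems x R_gs[of i n m] by (auto simp: farG_def)
  next
    case (Rg i) then show ?thesis using Cons.prems x R_gr[of i n m] by (auto simp: farG_def)
  next
    case (Gg i) then show ?thesis using Cons.prems x by (auto simp: farG_def)
  qed
  have "cls n (gw m @ x # w) = cls n ((gw m @ [x]) @ w)" by simp
  also have "\<dots> = cls n (([x] @ gw m) @ w)" using c1 xw by (intro cls_ctxR) auto
  also have "\<dots> = cls n ([x] @ (gw m @ w))" by simp
  also have "\<dots> = cls n ([x] @ (w @ gw m))" using Cons xw by (intro cls_ctxL) auto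
  finally show ?case by simp
qed

lemma rho_far_conj: "1 \<le> m \<Longrightarrow> m < n \<Longrightarrow> w \<in> words n \<Longrightarrow> farR m w \<Longrightarrow> cls n (rw m @ w @ rw m) = cls n w"
proof -
  assume a: "1 \<le> m" "m < n" "w \<in> words n" "farR m w"
  have "cls n (rw m @ w @ rw m) = cls n ((rw m @ w) @ rw m)" by simp
  also have "\<dots> = cls n ((w @ rw m) @ rw m)" using a rho_far_word by (intro cls_ctxR) auto
  also have "\<dots> = cls n (w @ (rw m @ rw m))" by simp
  also have "\<dots> = cls n (w @ [])" using a by (intro cls_ctxL R_rr) auto
  finally show ?thesis by simp
qed

lemma gamma_far_conj: "1 \<le> m \<Longrightarrow> m \<le> n \<Longrightarrow> w \<in> words n \<Longrightarrow> farG m w \<Longrightarrow> cls n (gw m @ w @ gw m) = cls n w"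
proof -
  assume a: "1 \<le> m" "m \<le> n" "w \<in> words n" "farG m w"
  have "cls n (gw m @ w @ gw m) = cls n ((gw m @ w) @ gw m)" by simp
  also have "\<dots> = cls n ((w @ gw m) @ gw m)" using a gamma_far_word by (intro cls_ctxR) auto
  also have "\<dots> = cls n (w @ (gw m @ gw m))" by simp
  also have "\<dots> = cls n (w @ [])" using a by (intro cls_ctxL R_gg) auto
  finally show ?thesis by simp
qed

lemma I2: "1 \<le> i \<Longrightarrow> Suc i < n \<Longrightarrow> cls n (rw i @ rw (Suc i) @ sw i @ rw (Suc i) @ rw i) = cls n (sw (Suc i))"
proof -
  assume i: "1 \<le> i" "Suc i < n"
  have "cls n (rw i @ rw (Suc i) @ sw i @ rw (Suc i) @ rw i) = cls n ((rw i @ rw (Suc i) @ sw i) @ rw (Suc i) @ rw i)" by simp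
  also have "\<dots> = cls n ((sw (Suc i) @ rw i @ rw (Suc i)) @ rw (Suc i) @ rw i)"
    using R_rrs[of i n] i by (intro cls_ctxR) auto
  also have "\<dots> = cls n (sw (Suc i) @ rw i @ (rw (Suc i) @ rw (Suc i)) @ rw i)" by simp
  also have "\<dots> = cls n (sw (Suc i) @ rw i @ [] @ rw i)"
    using R_rr[of "Suc i" n] i cls_ctx[of n "rw (Suc i) @ rw (Suc i)" "[]" "sw (Suc i) @ rw i" "rw i"] by simp
  also have "\<dots> = cls n (sw (Suc i) @ (rw i @ rw i))" by simp
  also have "\<dots> = cls n (sw (Suc i) @ [])" using i by (intro cls_ctxL R_rr) auto
  finally show ?thesis by simp
qed

lemma I1: "1 \<le> i \<Longrightarrow> Suc i < n \<Longrightarrow> cls n (rw i @ sw (Suc i) @ rw i) = cls n (rw (Suc i) @ sw i @ rw (Suc i))"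
proof -
  assume i: "1 \<le> i" "Suc i < n"
  have "cls n (rw i @ sw (Suc i) @ rw i) = cls n (rw i @ (rw i @ rw (Suc i) @ sw i @ rw (Suc i) @ rw i) @ rw i)"
    using cls_ctx[OF I2[OF i, symmetric], of "rw i" "rw i"] i by simp
  also have "\<dots> = cls n ((rw i @ rw i) @ (rw (Suc i) @ sw i @ rw (Suc i)) @ (rw i @ rw i))" by simp
  also have "\<dots> = cls n ([] @ (rw (Suc i) @ sw i @ rw (Suc i)) @ (rw i @ rw i))"
    using i by (intro cls_ctxR R_rr) auto
  also have "\<dots> = cls n ((rw (Suc i) @ sw i @ rw (Suc i)) @ (rw i @ rw i))" by simp
  also have "\<dots> = cls n ((rw (Suc i) @ sw i @ rw (Suc i)) @ [])"
    using i by (intro cls_ctxL R_rr) auto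
  finally show ?thesis by simp
qed

lemma rr3: "1 \<le> i \<Longrightarrow> Suc i < n \<Longrightarrow> cls n (rw i @ rw (Suc i) @ rw i @ rw (Suc i)) = cls n (rw (Suc i) @ rw i)"
proof -
  assume i: "1 \<le> i" "Suc i < n"
  have "cls n (rw i @ rw (Suc i) @ rw i @ rw (Suc i)) = cls n ((rw (Suc i) @ rw i @ rw (Suc i)) @ rw (Suc i))"
    using R_rbraid[of i n] i cls_ctxR[of n "rw i @ rw (Suc i) @ rw i" "rw (Suc i) @ rw i @ rw (Suc i)" "rw (Suc i)"] by simp
  also have "\<dots> = cls n ((rw (Suc i) @ rw i) @ (rw (Suc i) @ rw (Suc i)))" by simp
  also have "\<dots> = cls n ((rw (Suc i) @ rw i) @ [])" using i by (intro cls_ctxL R_rr) auto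
  finally show ?thesis by simp
qed

lemma rr3': "1 \<le> i \<Longrightarrow> Suc i < n \<Longrightarrow> cls n (rw (Suc i) @ rw i @ rw (Suc i) @ rw i) = cls n (rw i @ rw (Suc i))"
proof -
  assume i: "1 \<le> i" "Suc i < n"
  have "cls n (rw (Suc i) @ rw i @ rw (Suc i) @ rw i) = cls n ((rw i @ rw (Suc i) @ rw i) @ rw i)"
    using R_rbraid[of i n] i cls_ctxR[of n "rw (Suc i) @ rw i @ rw (Suc i)" "rw i @ rw (Suc i) @ rw i" "rw i"] by simp
  also have "\<dots> = cls n ((rw i @ rw (Suc i)) @ (rw i @ rw i))" by simp
  also have "\<dots> = cls n ((rw i @ rw (Suc i)) @ [])" using i by (intro cls_ctxL R_rr) auto
  finally show ?thesis by simp
qed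

lemma I3: "1 \<le> i \<Longrightarrow> Suc i < n \<Longrightarrow>
  cls n (rw i @ rw (Suc i) @ sw (Suc i) @ rw (Suc i) @ rw i) = cls n (rw (Suc i) @ rw i @ sw i @ rw i @ rw (Suc i))"
proof -
  assume i: "1 \<le> i" "Suc i < n"
  have "cls n (rw i @ rw (Suc i) @ sw (Suc i) @ rw (Suc i) @ rw i)
     = cls n ((rw i @ rw (Suc i)) @ (rw i @ rw (Suc i) @ sw i @ rw (Suc i) @ rw i) @ (rw (Suc i) @ rw i))"
    using cls_ctx[OF I2[OF i, symmetric], of "rw i @ rw (Suc i)" "rw (Suc i) @ rw i"] i by simp
  also have "\<dots> = cls n ((rw i @ rw (Suc i) @ rw i @ rw (Suc i)) @ sw i @ (rw (Suc i) @ rw i @ rw (Suc i) @ rw i))" by simp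
  also have "\<dots> = cls n ((rw (Suc i) @ rw i) @ sw i @ (rw (Suc i) @ rw i @ rw (Suc i) @ rw i))"
    using i by (intro cls_ctxR rr3) auto
  also have "\<dots> = cls n ((rw (Suc i) @ rw i @ sw i) @ (rw i @ rw (Suc i)))"
    using i cls_ctxL[OF rr3'[OF i], of "rw (Suc i) @ rw i @ sw i"] by simp
  finally show ?thesis by simp
qed

lemma I4: "1 \<le> i \<Longrightarrow> Suc i < n \<Longrightarrow>
  cls n (rw i @ rw (Suc i) @ rw i @ sw i @ rw i @ rw (Suc i) @ rw i) = cls n (rw (Suc i) @ sw (Suc i) @ rw (Suc i))"
proof -
  assume i: "1 \<le> i" "Suc i < n"
  have "cls n (rw i @ rw (Suc i) @ rw i @ sw i @ rw i @ rw (Suc i) @ rw i)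
      = cls n ((rw i @ rw (Suc i) @ rw i) @ (sw i @ rw i @ rw (Suc i) @ rw i))" by simp
  also have "\<dots> = cls n ((rw (Suc i) @ rw i @ rw (Suc i)) @ (sw i @ rw i @ rw (Suc i) @ rw i))"
    using i by (intro cls_ctxR R_rbraid) auto
  also have "\<dots> = cls n ((rw (Suc i) @ rw i @ rw (Suc i) @ sw i) @ (rw i @ rw (Suc i) @ rw i))" by simp
  also have "\<dots> = cls n ((rw (Suc i) @ rw i @ rw (Suc i) @ sw i) @ (rw (Suc i) @ rw i @ rw (Suc i)))"
    using i by (intro cls_ctxL R_rbraid) auto
  also have "\<dots> = cls n (rw (Suc i) @ (rw i @ rw (Suc i) @ sw i @ rw (Suc i) @ rw i) @ rw (Suc i))" by simp
  also have "\<dots> = cls n (rw (Suc i) @ sw (Suc i) @ rw (Suc i))"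
    using i by (intro cls_ctx I2) auto
  finally show ?thesis .
qed

lemma vl_upt[simp]: "vl n [a..<b] \<longleftrightarrow> (a < b \<longrightarrow> 1 \<le> a \<and> b \<le> n)"
proof
  assume v: "vl n [a..<b]"
  show "a < b \<longrightarrow> 1 \<le> a \<and> b \<le> n"
  proof
    assume ab: "a < b"
    have "b - 1 \<in> set [a..<b]" "a \<in> set [a..<b]" using ab by auto
    then show "1 \<le> a \<and> b \<le> n" using v unfolding vl_def by fastforce
  qed
qed (auto simp: vl_def)
lemma vl_rev[simp]: "vl n (rev p) \<longleftrightarrow> vl n p" by (auto simp: vl_def)

lemma rup_rwl: "rup a b = rwl [a..<b]" by (simp add: rup_def rwl_def)
lemma rev_rwl: "rev (rwl p) = rwl (rev p)" by (simp add: rwl_def rev_map)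

lemma xw_lt: "k < l \<Longrightarrow> xw k l = rwl (rev [Suc k..<l]) @ sw k @ rwl [Suc k..<l]"
  by (simp add: xw_def rup_rwl rev_rwl)
lemma xw_gt: "l < k \<Longrightarrow> xw k l = rwl (rev [l..<k]) @ sw l @ rwl [l..<k]"
  by (simp add: xw_def rup_rwl rev_rwl)

lemma upt_split3: "a \<le> m \<Longrightarrow> Suc (Suc m) \<le> b \<Longrightarrow> [a..<b] = [a..<m] @ m # Suc m # [Suc (Suc m)..<b]"
proof -
  assume a: "a \<le> m" "Suc (Suc m) \<le> b"
  have "[a..<b] = [a..<m] @ [m..<b]" using a upt_add_eq_append[of a m "b - m"] by simp
  also have "[m..<b] = m # Suc m # [Suc (Suc m)..<b]" using a by (simp add: upt_conv_Cons)
  finally show ?thesis .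
qed

lemma rwl_comm': "\<forall>i\<in>set q. j+2 \<le> i \<or> i+2 \<le> j \<Longrightarrow> vl n q \<Longrightarrow> 1 \<le> j \<Longrightarrow> j < n \<Longrightarrow>
   cls n (rw j @ rwl q) = cls n (rwl q @ rw j)"
  using rwl_comm by metis

lemma shiftR:
  assumes "1 \<le> a" "a \<le> m" "Suc (Suc m) \<le> b" "b \<le> n"
  shows "cls n (rwl [a..<b] @ rw m) = cls n (rw (Suc m) @ rwl [a..<b])"
proof -
  define A where "A = rwl [a..<m]"
  define B where "B = rwl [Suc (Suc m)..<b]"
  have e: "rwl [a..<b] = A @ rw m @ rw (Suc m) @ B" unfolding A_def B_def using upt_split3[OF assms(2,3)] by simp
  have wA: "A \<in> words n" "B \<in> words n" unfolding A_def B_def using assms by auto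
  have "cls n (rwl [a..<b] @ rw m) = cls n ((A @ rw m @ rw (Suc m)) @ (B @ rw m))" using e by simp
  also have "\<dots> = cls n ((A @ rw m @ rw (Suc m)) @ (rw m @ B))"
    using assms wA(1) unfolding B_def by (intro cls_ctxL rwl_comm) auto
  also have "\<dots> = cls n (A @ (rw m @ rw (Suc m) @ rw m) @ B)" by simp
  also have "\<dots> = cls n (A @ (rw (Suc m) @ rw m @ rw (Suc m)) @ B)"
    using assms wA by (intro cls_ctx R_rbraid) auto
  also have "\<dots> = cls n ((A @ rw (Suc m)) @ (rw m @ rw (Suc m) @ B))" by simp
  also have "\<dots> = cls n ((rw (Suc m) @ A) @ (rw m @ rw (Suc m) @ B))"
    unfolding A_def using assms wA by (intro cls_ctxR rwl_comm) auto
  finally show ?thesis using e by simp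
qed

lemma shiftL:
  assumes "1 \<le> a" "a \<le> m" "Suc (Suc m) \<le> b" "b \<le> n"
  shows "cls n (rw m @ rwl (rev [a..<b])) = cls n (rwl (rev [a..<b]) @ rw (Suc m))"
proof -
  define A where "A = rwl (rev [a..<m])"
  define B where "B = rwl (rev [Suc (Suc m)..<b])"
  have e: "rwl (rev [a..<b]) = B @ rw (Suc m) @ rw m @ A" unfolding A_def B_def using upt_split3[OF assms(2,3)] by simp
  have wA: "A \<in> words n" "B \<in> words n" unfolding A_def B_def using assms by auto
  have "cls n (rw m @ rwl (rev [a..<b])) = cls n ((rw m @ B) @ (rw (Suc m) @ rw m @ A))" using e by simp
  also have "\<dots> = cls n ((B @ rw m) @ (rw (Suc m) @ rw m @ A))"
  proof -
    have c: "cls n (rw m @ B) = cls n (B @ rw m)" unfolding B_def using assms by (intro rwl_comm') auto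
    show ?thesis by (rule cls_ctxR[OF c]) (use wA assms in simp)
  qed
  also have "\<dots> = cls n (B @ (rw m @ rw (Suc m) @ rw m) @ A)" by simp
  also have "\<dots> = cls n (B @ (rw (Suc m) @ rw m @ rw (Suc m)) @ A)"
    using assms wA by (intro cls_ctx R_rbraid) auto
  also have "\<dots> = cls n ((B @ rw (Suc m) @ rw m) @ (rw (Suc m) @ A))" by simp
  also have "\<dots> = cls n ((B @ rw (Suc m) @ rw m) @ (A @ rw (Suc m)))"
  proof -
    have c: "cls n (rw (Suc m) @ A) = cls n (A @ rw (Suc m))" unfolding A_def using assms by (intro rwl_comm') auto
    show ?thesis by (rule cls_ctxL[OF c]) (use wA assms in simp)
  qed
  finally show ?thesis using e by simp
qed

lemma conjQ:
  assumes "A \<in> words n" "B \<in> words n" "M \<in> words n" "1 \<le> m" "m < n" "1 \<le> m'" "m' < n"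
    "cls n (rw m @ A) = cls n (A @ rw m')" "cls n (B @ rw m) = cls n (rw m' @ B)"
    "cls n (rw m' @ M @ rw m') = cls n M'"
  shows "cls n (rw m @ A @ M @ B @ rw m) = cls n (A @ M' @ B)"
proof -
  have "cls n (rw m @ A @ M @ B @ rw m) = cls n ((rw m @ A) @ M @ (B @ rw m))" by simp
  also have "\<dots> = cls n ((A @ rw m') @ M @ (B @ rw m))" using assms by (intro cls_ctxR) auto
  also have "\<dots> = cls n ((A @ rw m') @ M @ (rw m' @ B))" using assms by (intro cls_ctxL) auto
  also have "\<dots> = cls n (A @ (rw m' @ M @ rw m') @ B)" by simp
  also have "\<dots> = cls n (A @ M' @ B)" using assms by (intro cls_ctx) auto
  finally show ?thesis .
qed

lemma rr_conj_cancel: "1 \<le> m \<Longrightarrow> m < n \<Longrightarrow> w \<in> words n \<Longrightarrow> cls n (rw m @ rw m @ w @ rw m @ rw m) = cls n w"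
proof -
  assume a: "1 \<le> m" "m < n" "w \<in> words n"
  have "cls n (rw m @ rw m @ w @ rw m @ rw m) = cls n ((rw m @ rw m) @ w @ (rw m @ rw m))" by simp
  also have "\<dots> = cls n ([] @ w @ (rw m @ rw m))" using a by (intro cls_ctxR R_rr) auto
  also have "\<dots> = cls n (w @ (rw m @ rw m))" by simp
  also have "\<dots> = cls n (w @ [])" using a by (intro cls_ctxL R_rr) auto
  finally show ?thesis by simp
qed


lemma RX_lt:
  assumes kl: "1 \<le> k" "k < l" "l \<le> n" and m: "1 \<le> m" "m < n"
  shows "cls n (rw m @ xw k l @ rw m) = cls n (xw (Transposition.transpose m (Suc m) k) (Transposition.transpose m (Suc m) l))"
proof -
  define P where "P = [Suc k..<l]"
  have x: "xw k l = rwl (rev P) @ sw k @ rwl P" unfolding P_def using kl by (simp add: xw_lt)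
  have wP: "rwl P \<in> words n" "rwl (rev P) \<in> words n" unfolding P_def using kl by auto
  consider "Suc m < k \<or> l < m" | "k < m \<and> Suc (Suc m) \<le> l" | "Suc m = k" | "m = k \<and> l = Suc k"
    | "m = k \<and> Suc k < l" | "Suc m = l \<and> k < m" | "m = l" by linarith
  then show ?thesis
  proof cases
    case 1
    then have s: "Transposition.transpose m (Suc m) k = k" "Transposition.transpose m (Suc m) l = l"
      using kl by (auto simp: transpose_def)
    have "cls n (rw m @ xw k l @ rw m) = cls n (xw k l)"
      using 1 kl m wP unfolding x P_def by (intro rho_far_conj) auto
    then show ?thesis using s by simp
  next
    case 2
    then have s: "Transposition.transpose m (Suc m) k = k" "Transposition.transpose m (Suc m) l = l"
      using kl by (auto simp: transpose_def)
    have "cls n (rw m @ rwl (rev P) @ sw k @ rwl P @ rw m) = cls n (rwl (rev P) @ sw k @ rwl P)"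
    proof (rule conjQ[where m' = "Suc m"])
      show "cls n (rw m @ rwl (rev P)) = cls n (rwl (rev P) @ rw (Suc m))"
        unfolding P_def using 2 kl by (intro shiftL) auto
      show "cls n (rwl P @ rw m) = cls n (rw (Suc m) @ rwl P)"
        unfolding P_def using 2 kl by (intro shiftR) auto
      show "cls n (rw (Suc m) @ sw k @ rw (Suc m)) = cls n (sw k)"
        using 2 kl by (intro rho_far_conj) auto
    qed (use wP 2 kl m in auto)
    then show ?thesis using s x by simp
  next
    case 3
    then have s: "Transposition.transpose m (Suc m) k = m" "Transposition.transpose m (Suc m) l = l"
      using kl by (auto simp: transpose_def)
    have t: "xw m l = rwl (rev P) @ (rw k @ sw m @ rw k) @ rwl P"
      unfolding P_def using kl 3 by (simp add: xw_lt upt_conv_Cons)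
    have "cls n (rw m @ rwl (rev P) @ sw k @ rwl P @ rw m) = cls n (rwl (rev P) @ (rw k @ sw m @ rw k) @ rwl P)"
    proof (rule conjQ[where m' = m])
      show "cls n (rw m @ rwl (rev P)) = cls n (rwl (rev P) @ rw m)"
        unfolding P_def using 3 kl m by (intro rwl_comm') auto
      show "cls n (rwl P @ rw m) = cls n (rw m @ rwl P)"
        unfolding P_def using 3 kl m by (intro rwl_comm) auto
      show "cls n (rw m @ sw k @ rw m) = cls n (rw k @ sw m @ rw k)"
        using I1[of m n] 3 kl m by simp
    qed (use wP 3 kl m in auto)
    then show ?thesis using s x t by simp
  next
    case 4
    then show ?thesis by (simp add: xw_lt xw_gt transpose_def)
  next
    case 5
    define P' where "P' = [Suc (Suc k)..<l]"
    have e: "P = Suc k # P'" unfolding P_def P'_def using 5 by (simp add: upt_conv_Cons)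
    have wP': "rwl P' \<in> words n" "rwl (rev P') \<in> words n" unfolding P'_def using kl by auto
    have s: "Transposition.transpose m (Suc m) k = Suc k" "Transposition.transpose m (Suc m) l = l"
      using 5 by (auto simp: transpose_def)
    have t: "xw (Suc k) l = rwl (rev P') @ sw (Suc k) @ rwl P'"
      unfolding P'_def using 5 by (simp add: xw_lt)
    have "cls n (rw m @ rwl (rev P') @ (rw (Suc k) @ sw k @ rw (Suc k)) @ rwl P' @ rw m) = cls n (rwl (rev P') @ sw (Suc k) @ rwl P')"
    proof (rule conjQ[where m' = m])
      show "cls n (rw m @ rwl (rev P')) = cls n (rwl (rev P') @ rw m)"
        unfolding P'_def using 5 kl m by (intro rwl_comm') auto
      show "cls n (rwl P' @ rw m) = cls n (rw m @ rwl P')"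
        unfolding P'_def using 5 kl m by (intro rwl_comm) auto
      show "cls n (rw m @ (rw (Suc k) @ sw k @ rw (Suc k)) @ rw m) = cls n (sw (Suc k))"
        using I2[of k n] 5 kl m by simp
    qed (use wP' 5 kl m in auto)
    then show ?thesis using s x t e by simp
  next
    case 6
    define P0 where "P0 = [Suc k..<m]"
    have e: "P = P0 @ [m]" unfolding P_def P0_def using 6 upt_Suc_append[of "Suc k" m] by auto
    have s: "Transposition.transpose m (Suc m) k = k" "Transposition.transpose m (Suc m) l = m"
      using 6 by (auto simp: transpose_def)
    have t: "xw k m = rwl (rev P0) @ sw k @ rwl P0" unfolding P0_def using 6 by (simp add: xw_lt)
    have w0: "rwl (rev P0) @ sw k @ rwl P0 \<in> words n" unfolding P0_def using 6 kl m by auto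
    have "cls n (rw m @ rw m @ (rwl (rev P0) @ sw k @ rwl P0) @ rw m @ rw m) = cls n (rwl (rev P0) @ sw k @ rwl P0)"
      using rr_conj_cancel[OF m w0] .
    then show ?thesis using s x t e by simp
  next
    case 7
    have s: "Transposition.transpose m (Suc m) k = k" "Transposition.transpose m (Suc m) l = Suc l"
      using 7 kl by (auto simp: transpose_def)
    have "xw k (Suc l) = rw m @ xw k l @ rw m" using 7 kl x unfolding P_def by (simp add: xw_lt)
    then show ?thesis using s by simp
  qed
qed

lemma RX_gt:
  assumes kl: "1 \<le> l" "l < k" "k \<le> n" and m: "1 \<le> m" "m < n"
  shows "cls n (rw m @ xw k l @ rw m) = cls n (xw (Transposition.transpose m (Suc m) k) (Transposition.transpose m (Suc m) l))"
proof -
  define Q where "Q = [Suc l..<k]"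
  have x: "xw k l = rwl (rev Q) @ (rw l @ sw l @ rw l) @ rwl Q" unfolding Q_def using kl by (simp add: xw_gt upt_conv_Cons)
  have wQ: "rwl Q \<in> words n" "rwl (rev Q) \<in> words n" unfolding Q_def using kl by auto
  have wM: "rw l @ sw l @ rw l \<in> words n" using kl by auto
  consider "Suc m < l \<or> k < m" | "l < m \<and> Suc (Suc m) \<le> k" | "Suc m = l" | "m = l \<and> k = Suc l"
    | "m = l \<and> Suc l < k" | "Suc m = k \<and> l < m" | "m = k" by linarith
  then show ?thesis
  proof cases
    case 1
    then have s: "Transposition.transpose m (Suc m) k = k" "Transposition.transpose m (Suc m) l = l"
      using kl by (auto simp: transpose_def)
    have "cls n (rw m @ xw k l @ rw m) = cls n (xw k l)"
      using 1 kl m wQ unfolding x Q_def by (intro rho_far_conj) auto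
    then show ?thesis using s by simp
  next
    case 2
    then have s: "Transposition.transpose m (Suc m) k = k" "Transposition.transpose m (Suc m) l = l"
      using kl by (auto simp: transpose_def)
    have "cls n (rw m @ rwl (rev Q) @ (rw l @ sw l @ rw l) @ rwl Q @ rw m) = cls n (rwl (rev Q) @ (rw l @ sw l @ rw l) @ rwl Q)"
    proof (rule conjQ[where m' = "Suc m"])
      show "cls n (rw m @ rwl (rev Q)) = cls n (rwl (rev Q) @ rw (Suc m))"
        unfolding Q_def using 2 kl by (intro shiftL) auto
      show "cls n (rwl Q @ rw m) = cls n (rw (Suc m) @ rwl Q)"
        unfolding Q_def using 2 kl by (intro shiftR) auto
      show "cls n (rw (Suc m) @ (rw l @ sw l @ rw l) @ rw (Suc m)) = cls n (rw l @ sw l @ rw l)"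
        using 2 kl by (intro rho_far_conj) auto
    qed (use wQ 2 kl m in auto)
    then show ?thesis using s x by simp
  next
    case 3
    then have s: "Transposition.transpose m (Suc m) k = k" "Transposition.transpose m (Suc m) l = m"
      using kl by (auto simp: transpose_def)
    have t: "xw k m = rwl (rev Q) @ (rw l @ rw m @ sw m @ rw m @ rw l) @ rwl Q"
      unfolding Q_def using kl 3 by (simp add: xw_gt upt_conv_Cons)
    have "cls n (rw m @ rwl (rev Q) @ (rw l @ sw l @ rw l) @ rwl Q @ rw m) = cls n (rwl (rev Q) @ (rw l @ rw m @ sw m @ rw m @ rw l) @ rwl Q)"
    proof (rule conjQ[where m' = m])
      show "cls n (rw m @ rwl (rev Q)) = cls n (rwl (rev Q) @ rw m)"
        unfolding Q_def using 3 kl m by (intro rwl_comm') auto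
      show "cls n (rwl Q @ rw m) = cls n (rw m @ rwl Q)"
        unfolding Q_def using 3 kl m by (intro rwl_comm) auto
      show "cls n (rw m @ (rw l @ sw l @ rw l) @ rw m) = cls n (rw l @ rw m @ sw m @ rw m @ rw l)"
        using I3[of m n] 3 kl m by simp
    qed (use wQ 3 kl m in auto)
    then show ?thesis using s x t by simp
  next
    case 4
    have s: "Transposition.transpose m (Suc m) k = l" "Transposition.transpose m (Suc m) l = Suc l"
      using 4 by (auto simp: transpose_def)
    have w0: "sw l \<in> words n" using kl by auto
    have "cls n (rw m @ rw m @ sw l @ rw m @ rw m) = cls n (sw l)" using rr_conj_cancel[OF m w0] .
    then show ?thesis using s 4 by (simp add: xw_gt xw_lt)
  next
    case 5
    define Q' where "Q' = [Suc (Suc l)..<k]"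
    have e: "Q = Suc l # Q'" unfolding Q_def Q'_def using 5 by (simp add: upt_conv_Cons)
    have wQ': "rwl Q' \<in> words n" "rwl (rev Q') \<in> words n" unfolding Q'_def using kl by auto
    have s: "Transposition.transpose m (Suc m) k = k" "Transposition.transpose m (Suc m) l = Suc l"
      using 5 by (auto simp: transpose_def)
    have t: "xw k (Suc l) = rwl (rev Q') @ (rw (Suc l) @ sw (Suc l) @ rw (Suc l)) @ rwl Q'"
      unfolding Q'_def using 5 by (simp add: xw_gt upt_conv_Cons)
    have "cls n (rw m @ rwl (rev Q') @ (rw (Suc l) @ (rw l @ sw l @ rw l) @ rw (Suc l)) @ rwl Q' @ rw m) = cls n (rwl (rev Q') @ (rw (Suc l) @ sw (Suc l) @ rw (Suc l)) @ rwl Q')"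
    proof (rule conjQ[where m' = m])
      show "cls n (rw m @ rwl (rev Q')) = cls n (rwl (rev Q') @ rw m)"
        unfolding Q'_def using 5 kl m by (intro rwl_comm') auto
      show "cls n (rwl Q' @ rw m) = cls n (rw m @ rwl Q')"
        unfolding Q'_def using 5 kl m by (intro rwl_comm) auto
      show "cls n (rw m @ (rw (Suc l) @ (rw l @ sw l @ rw l) @ rw (Suc l)) @ rw m) = cls n (rw (Suc l) @ sw (Suc l) @ rw (Suc l))"
        using I4[of l n] 5 kl m by simp
    qed (use wQ' 5 kl m in auto)
    then show ?thesis using s x t e by simp
  next
    case 6
    define Q0 where "Q0 = [l..<m]"
    have e: "[l..<k] = Q0 @ [m]" unfolding Q0_def using 6 upt_Suc_append[of l m] by auto
    have s: "Transposition.transpose m (Suc m) k = m" "Transposition.transpose m (Suc m) l = l"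
      using 6 by (auto simp: transpose_def)
    have t: "xw m l = rwl (rev Q0) @ sw l @ rwl Q0" unfolding Q0_def using 6 by (simp add: xw_gt)
    have x2: "xw k l = rw m @ (rwl (rev Q0) @ sw l @ rwl Q0) @ rw m" using 6 e by (simp add: xw_gt)
    have w0: "rwl (rev Q0) @ sw l @ rwl Q0 \<in> words n" unfolding Q0_def using 6 kl m by auto
    have "cls n (rw m @ rw m @ (rwl (rev Q0) @ sw l @ rwl Q0) @ rw m @ rw m) = cls n (rwl (rev Q0) @ sw l @ rwl Q0)"
      using rr_conj_cancel[OF m w0] .
    then show ?thesis using s x2 t by simp
  next
    case 7
    have s: "Transposition.transpose m (Suc m) k = Suc k" "Transposition.transpose m (Suc m) l = l"
      using 7 kl by (auto simp: transpose_def)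
    have "xw (Suc k) l = rw m @ xw k l @ rw m" using 7 kl by (simp add: xw_gt)
    then show ?thesis using s by simp
  qed
qed

lemma RX:
  assumes "1 \<le> k" "k \<le> n" "1 \<le> l" "l \<le> n" "k \<noteq> l" "1 \<le> m" "m < n"
  shows "cls n (rw m @ xw k l @ rw m) = cls n (xw (Transposition.transpose m (Suc m) k) (Transposition.transpose m (Suc m) l))"
proof (cases "k < l")
  case True then show ?thesis using RX_lt assms by auto
next
  case False then show ?thesis using RX_gt assms by auto
qed


lemma pp_rev_upt_start: "a \<le> b \<Longrightarrow> pp (rev [a..<b]) a = b"
proof (induction b)
  case 0 then show ?case by simp
next
  case (Suc b)
  show ?case
  proof (cases "a = Suc b")
    case True then show ?thesis by simp
  next
    case False
    then have "a \<le> b" using Suc.prems by simp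
    then show ?thesis using Suc.IH by (simp add: transpose_def)
  qed
qed

lemma pp_upt_end: "a \<le> b \<Longrightarrow> pp [a..<b] b = a"
proof (induction b)
  case 0 then show ?case by simp
next
  case (Suc b)
  show ?case
  proof (cases "a = Suc b")
    case True then show ?thesis by simp
  next
    case False
    then have "a \<le> b" using Suc.prems by simp
    then show ?thesis using Suc.IH by (simp add: transpose_def)
  qed
qed

lemma pp_rev_upt_shift: "a \<le> m \<Longrightarrow> m < b \<Longrightarrow> pp (rev [a..<b]) (Suc m) = m"
proof (induction b)
  case 0 then show ?case by simp
next
  case (Suc b)
  show ?case
  proof (cases "m = b")
    case True
    have "pp (rev [a..<m]) (Suc m) = Suc m" by (rule pp_fix) auto
    then show ?thesis using True Suc.prems by (simp add: transpose_def)
  next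
    case False
    then have "m < b" using Suc.prems by simp
    then show ?thesis using Suc Suc.prems by (simp add: transpose_def)
  qed
qed

lemma pp_upt_shift: "a \<le> m \<Longrightarrow> m < b \<Longrightarrow> pp [a..<b] m = Suc m"
proof (induction b)
  case 0 then show ?case by simp
next
  case (Suc b)
  show ?case
  proof (cases "m = b")
    case True
    have "pp [a..<m] (Suc m) = Suc m" by (rule pp_fix) auto
    then show ?thesis using True Suc.prems by (simp add: transpose_def)
  next
    case False
    then have "m < b" using Suc.prems by simp
    then show ?thesis using Suc Suc.prems by (simp add: transpose_def)
  qed
qed

lemma rwl_gamma': "vl n p \<Longrightarrow> 1 \<le> j \<Longrightarrow> j \<le> n \<Longrightarrow> j' = pp p j \<Longrightarrow> cls n (gw j' @ rwl p) = cls n (rwl p @ gw j)"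
  using rwl_gamma by metis

lemma rwl_gamma2: "vl n p \<Longrightarrow> 1 \<le> j \<Longrightarrow> j \<le> n \<Longrightarrow> j' = pp p j \<Longrightarrow> cls n (rwl p @ gw j) = cls n (gw j' @ rwl p)"
  using rwl_gamma by metis

lemma conjG:
  assumes "A \<in> words n" "B \<in> words n" "M \<in> words n" "1 \<le> m" "m \<le> n" "1 \<le> m'" "m' \<le> n"
    "cls n (gw m @ A) = cls n (A @ gw m')" "cls n (B @ gw m) = cls n (gw m' @ B)"
    "cls n (gw m' @ M @ gw m') = cls n M'"
  shows "cls n (gw m @ A @ M @ B @ gw m) = cls n (A @ M' @ B)"
proof -
  have "cls n (gw m @ A @ M @ B @ gw m) = cls n ((gw m @ A) @ M @ (B @ gw m))" by simp
  also have "\<dots> = cls n ((A @ gw m') @ M @ (B @ gw m))" using assms by (intro cls_ctxR) auto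
  also have "\<dots> = cls n ((A @ gw m') @ M @ (gw m' @ B))" using assms by (intro cls_ctxL) auto
  also have "\<dots> = cls n (A @ (gw m' @ M @ gw m') @ B)" by simp
  also have "\<dots> = cls n (A @ M' @ B)" using assms by (intro cls_ctx) auto
  finally show ?thesis .
qed

lemma GX1_lt:
  assumes kl: "1 \<le> k" "k < l" "l \<le> n" and m: "1 \<le> m" "m \<le> n" "m \<noteq> k" "m \<noteq> l"
  shows "cls n (gw m @ xw k l @ gw m) = cls n (xw k l)"
proof -
  define P where "P = [Suc k..<l]"
  have x: "xw k l = rwl (rev P) @ sw k @ rwl P" unfolding P_def using kl by (simp add: xw_lt)
  have wP: "rwl P \<in> words n" "rwl (rev P) \<in> words n" unfolding P_def using kl by auto
  show ?thesis
  proof (cases "m < k \<or> l < m")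
    case True
    show ?thesis using True kl m wP unfolding x P_def by (intro gamma_far_conj) auto
  next
    case False
    then have mm: "k < m" "m < l" using m by auto
    have "cls n (gw m @ rwl (rev P) @ sw k @ rwl P @ gw m) = cls n (rwl (rev P) @ sw k @ rwl P)"
    proof (rule conjG[where m' = "Suc m"])
      show "cls n (gw m @ rwl (rev P)) = cls n (rwl (rev P) @ gw (Suc m))"
        unfolding P_def using mm kl by (intro rwl_gamma') (auto simp: pp_rev_upt_shift)
      show "cls n (rwl P @ gw m) = cls n (gw (Suc m) @ rwl P)"
        unfolding P_def using mm kl m by (intro rwl_gamma2) (auto simp: pp_upt_shift)
      show "cls n (gw (Suc m) @ sw k @ gw (Suc m)) = cls n (sw k)"
        using mm kl by (intro gamma_far_conj) auto
    qed (use wP mm kl m in auto)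
    then show ?thesis using x by simp
  qed
qed

lemma GX1_gt:
  assumes kl: "1 \<le> l" "l < k" "k \<le> n" and m: "1 \<le> m" "m \<le> n" "m \<noteq> k" "m \<noteq> l"
  shows "cls n (gw m @ xw k l @ gw m) = cls n (xw k l)"
proof -
  define Q where "Q = [Suc l..<k]"
  have x: "xw k l = rwl (rev Q) @ (rw l @ sw l @ rw l) @ rwl Q" unfolding Q_def using kl by (simp add: xw_gt upt_conv_Cons)
  have wQ: "rwl Q \<in> words n" "rwl (rev Q) \<in> words n" unfolding Q_def using kl by auto
  show ?thesis
  proof (cases "m < l \<or> k < m")
    case True
    show ?thesis using True kl m wQ unfolding x Q_def by (intro gamma_far_conj) auto
  next
    case False
    then have mm: "l < m" "m < k" using m by auto
    have "cls n (gw m @ rwl (rev Q) @ (rw l @ sw l @ rw l) @ rwl Q @ gw m) = cls n (rwl (rev Q) @ (rw l @ sw l @ rw l) @ rwl Q)"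
    proof (rule conjG[where m' = "Suc m"])
      show "cls n (gw m @ rwl (rev Q)) = cls n (rwl (rev Q) @ gw (Suc m))"
        unfolding Q_def using mm kl by (intro rwl_gamma') (auto simp: pp_rev_upt_shift)
      show "cls n (rwl Q @ gw m) = cls n (gw (Suc m) @ rwl Q)"
        unfolding Q_def using mm kl m by (intro rwl_gamma2) (auto simp: pp_upt_shift)
      show "cls n (gw (Suc m) @ (rw l @ sw l @ rw l) @ gw (Suc m)) = cls n (rw l @ sw l @ rw l)"
        using mm kl by (intro gamma_far_conj) auto
    qed (use wQ mm kl m in auto)
    then show ?thesis using x by simp
  qed
qed

lemma GX1:
  assumes "1 \<le> k" "k \<le> n" "1 \<le> l" "l \<le> n" "k \<noteq> l" "1 \<le> m" "m \<le> n" "m \<noteq> k" "m \<noteq> l"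
  shows "cls n (gw m @ xw k l @ gw m) = cls n (xw k l)"
proof (cases "k < l")
  case True then show ?thesis using GX1_lt assms by auto
next
  case False then show ?thesis using GX1_gt assms by auto
qed

lemma GX2:
  assumes kl: "1 \<le> l" "l < k" "k \<le> n"
  shows "cls n (xw k l) = cls n (gw k @ gw l @ xw l k @ gw l @ gw k)"
proof -
  define Q where "Q = [Suc l..<k]"
  define A where "A = rwl (rev Q)"
  define B where "B = rwl Q"
  have x: "xw k l = A @ (rw l @ sw l @ rw l) @ B" unfolding A_def B_def Q_def using kl by (simp add: xw_gt upt_conv_Cons)
  have x2: "xw l k = A @ sw l @ B" unfolding A_def B_def Q_def using kl by (simp add: xw_lt)
  have w: "A \<in> words n" "B \<in> words n" unfolding A_def B_def Q_def using kl by auto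
  have c1: "cls n (A @ gw (Suc l)) = cls n (gw k @ A)"
    unfolding A_def Q_def using kl by (intro rwl_gamma2) (auto simp: pp_rev_upt_start)
  have c2: "cls n (A @ gw l) = cls n (gw l @ A)"
  proof -
    have "pp (rev Q) l = l" unfolding Q_def by (rule pp_fix) auto
    then show ?thesis unfolding A_def Q_def using kl by (intro rwl_gamma2) auto
  qed
  have c3: "cls n (gw l @ B) = cls n (B @ gw l)"
  proof -
    have "pp Q l = l" unfolding Q_def by (rule pp_fix) auto
    then show ?thesis unfolding B_def Q_def using kl by (intro rwl_gamma') auto
  qed
  have c4: "cls n (gw (Suc l) @ B) = cls n (B @ gw k)"
    unfolding B_def Q_def using kl by (intro rwl_gamma') (auto simp: pp_upt_end)
  have "cls n (xw k l) = cls n (A @ (gw (Suc l) @ gw l @ sw l @ gw l @ gw (Suc l)) @ B)"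
    unfolding x using kl w by (intro cls_ctx R_rsr) auto
  also have "\<dots> = cls n ((A @ gw (Suc l)) @ (gw l @ sw l @ gw l @ gw (Suc l) @ B))" by simp
  also have "\<dots> = cls n ((gw k @ A) @ (gw l @ sw l @ gw l @ gw (Suc l) @ B))"
    using c1 w kl by (intro cls_ctxR) auto
  also have "\<dots> = cls n (gw k @ (A @ gw l) @ (sw l @ gw l @ gw (Suc l) @ B))" by simp
  also have "\<dots> = cls n (gw k @ (gw l @ A) @ (sw l @ gw l @ gw (Suc l) @ B))"
    using c2 w kl by (intro cls_ctx) auto
  also have "\<dots> = cls n ((gw k @ gw l @ A @ sw l @ gw l) @ (gw (Suc l) @ B))" by simp
  also have "\<dots> = cls n ((gw k @ gw l @ A @ sw l @ gw l) @ (B @ gw k))"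
    using c4 w kl by (intro cls_ctxL) auto
  also have "\<dots> = cls n ((gw k @ gw l @ A @ sw l) @ (gw l @ B) @ gw k)" by simp
  also have "\<dots> = cls n ((gw k @ gw l @ A @ sw l) @ (B @ gw l) @ gw k)"
    using c3 w kl by (intro cls_ctx) auto
  finally show ?thesis using x2 by simp
qed


lemma Wword_simps[simp]: "Wword []" "Wword (u@v) \<longleftrightarrow> Wword u \<and> Wword v"
  "Wword (rwl p)" "Wword (rw i)" "Wword (gw i)" "Wword [(Gg i, b)]" "Wword [(Rg i, b)]"
  by (auto simp: Wword_def rwl_def)
lemma Wword_Cons[simp]: "Wword ((Rg i, b) # u) \<longleftrightarrow> Wword u" "Wword ((Gg i, b) # u) \<longleftrightarrow> Wword u"
  "Wword ((Sg i, b) # u) \<longleftrightarrow> False"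
  by (auto simp: Wword_def)

lemma transp_range: "1 \<le> m \<Longrightarrow> m < n \<Longrightarrow> (Suc 0 \<le> Transposition.transpose m (Suc m) j) = (Suc 0 \<le> j)"
  "1 \<le> m \<Longrightarrow> m < n \<Longrightarrow> (Transposition.transpose m (Suc m) j \<le> n) = (j \<le> n)"
  by (auto simp: transpose_def)

lemma Wword_gwl: "Wword (gwl a L)" by (induction L) (auto simp: Wword_def)
lemma Wword_gword[simp]: "Wword (gword n a)" by (simp add: gword_def Wword_gwl)
lemma Wword_invw[simp]: "Wword (invw u) \<longleftrightarrow> Wword u"
  by (auto simp: Wword_def invw_def inv_letter_def)
lemma invw_invw[simp]: "invw (invw u) = u"
  by (simp add: invw_def rev_map[symmetric] inv_letter_def comp_def)

lemma inv_right: "u \<in> words n \<Longrightarrow> cls n (u @ invw u) = cls n []"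
  using invw_inv[of "invw u" n] by simp

lemma W_eq:
  assumes "Wword u" "Wword v" "u \<in> words n" "v \<in> words n" "F u = F v"
  shows "cls n u = cls n v"
proof -
  have Fv: "F (v @ invw v) = id" using F_cls[OF _ inv_right[of v n]] assms by simp
  have F1: "F (u @ invw v) = id" using Fv assms(5) by simp
  have w: "u @ invw v \<in> words n" "Wword (u @ invw v)" using assms by auto
  have "word_perm (u @ invw v) = id" using F1 F_fst[of "u @ invw v"] by (metis eq_id_iff fst_conv)
  moreover have "\<forall>j. 1 \<le> j \<and> j \<le> n \<longrightarrow> \<not> flipv (u @ invw v) j" using F1 unfolding flipv_def by simp
  ultimately have c: "cls n (u @ invw v) = cls n []" using Wfaithful w by blast
  have "cls n u = cls n (u @ (invw v @ v))" using cls_ctxL[OF invw_inv[of v n, symmetric], of u] assms by simp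
  also have "\<dots> = cls n ((u @ invw v) @ v)" by simp
  also have "\<dots> = cls n ([] @ v)" using c assms by (intro cls_ctxR) auto
  finally show ?thesis by simp
qed

lemma F_rw: "F (rw m) (j,b) = (Transposition.transpose m (Suc m) j, b)" by simp

lemma rho_gword:
  assumes "1 \<le> m" "m < n"
  shows "cls n (rw m @ gword n a) = cls n (gword n (a \<circ> Transposition.transpose m (Suc m)) @ rw m)"
proof (rule W_eq)
  show "F (rw m @ gword n a) = F (gword n (a \<circ> Transposition.transpose m (Suc m)) @ rw m)"
    using assms by (simp add: fun_eq_iff F_gword transp_range)
qed (use assms in auto)

lemma gword_rho:
  assumes "1 \<le> m" "m < n"
  shows "cls n (gword n a @ rw m) = cls n (rw m @ gword n (a \<circ> Transposition.transpose m (Suc m)))"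
proof (rule W_eq)
  show "F (gword n a @ rw m) = F (rw m @ gword n (a \<circ> Transposition.transpose m (Suc m)))"
    using assms by (simp add: fun_eq_iff F_gword transp_range)
qed (use assms in auto)

lemma gamma_gword:
  assumes "1 \<le> m" "m \<le> n"
  shows "cls n (gw m @ gword n a) = cls n (gword n (a(m := \<not> a m)))"
proof (rule W_eq)
  show "F (gw m @ gword n a) = F (gword n (a(m := \<not> a m)))"
    using assms by (auto simp: fun_eq_iff F_gword)
qed (use assms in auto)

lemma gword_gamma:
  assumes "1 \<le> m" "m \<le> n"
  shows "cls n (gword n a @ gw m) = cls n (gword n (a(m := \<not> a m)))"
proof (rule W_eq)
  show "F (gword n a @ gw m) = F (gword n (a(m := \<not> a m)))"
    using assms by (auto simp: fun_eq_iff F_gword)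
qed (use assms in auto)

lemma gamma_gword_comm:
  assumes "1 \<le> m" "m \<le> n"
  shows "cls n (gw m @ gword n a) = cls n (gword n a @ gw m)"
  using gamma_gword[OF assms] gword_gamma[OF assms] by simp

definition XE :: "nat \<Rightarrow> word set set" where
  "XE n = {cls n (gword n a @ xw k l @ gword n a) | a k l. 1 \<le> k \<and> k \<le> n \<and> 1 \<le> l \<and> l \<le> n \<and> k \<noteq> l \<and> (\<forall>j. a j \<longrightarrow> j = k \<or> j = l)}"

lemma xw_words: "1 \<le> k \<Longrightarrow> k \<le> n \<Longrightarrow> 1 \<le> l \<Longrightarrow> l \<le> n \<Longrightarrow> k \<noteq> l \<Longrightarrow> xw k l \<in> words n"
  by (cases "k < l") (auto simp: xw_lt xw_gt)

lemma XE_rho: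
  assumes "e \<in> XE n" "1 \<le> m" "m < n"
  shows "cls n (rw m @ (SOME w. w \<in> e) @ rw m) \<in> XE n"
proof -
  let ?s = "Transposition.transpose m (Suc m)"
  obtain a k l where e: "e = cls n (gword n a @ xw k l @ gword n a)" and kl: "1 \<le> k" "k \<le> n" "1 \<le> l" "l \<le> n" "k \<noteq> l"
    and sup: "\<forall>j. a j \<longrightarrow> j = k \<or> j = l" using assms(1) unfolding XE_def by blast
  have wx: "xw k l \<in> words n" using kl xw_words by auto
  have we: "gword n a @ xw k l @ gword n a \<in> words n" using wx by simp
  obtain w where w: "w \<in> words n" "cls n w = e" "w = (SOME w. w \<in> e)" using cls_some[OF we] e by auto
  define a' where "a' = a \<circ> ?s"
  have "cls n (rw m @ w @ rw m) = cls n (rw m @ (gword n a @ xw k l @ gword n a) @ rw m)"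
    using w e assms by (intro cls_ctx) auto
  also have "\<dots> = cls n ((rw m @ gword n a) @ xw k l @ (gword n a @ rw m))" by simp
  also have "\<dots> = cls n ((gword n a' @ rw m) @ xw k l @ (gword n a @ rw m))"
    unfolding a'_def using assms wx by (intro cls_ctxR rho_gword) auto
  also have "\<dots> = cls n ((gword n a' @ rw m) @ xw k l @ (rw m @ gword n a'))"
    unfolding a'_def using assms wx by (intro cls_ctxL gword_rho) auto
  also have "\<dots> = cls n (gword n a' @ (rw m @ xw k l @ rw m) @ gword n a')" by simp
  also have "\<dots> = cls n (gword n a' @ xw (?s k) (?s l) @ gword n a')"
    using assms kl by (intro cls_ctx RX) auto
  finally have eq: "cls n (rw m @ w @ rw m) = cls n (gword n a' @ xw (?s k) (?s l) @ gword n a')" .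
  have kl': "1 \<le> ?s k" "?s k \<le> n" "1 \<le> ?s l" "?s l \<le> n" "?s k \<noteq> ?s l"
    using kl assms by (auto simp: transpose_def)
  have sup': "\<forall>j. a' j \<longrightarrow> j = ?s k \<or> j = ?s l"
    using sup unfolding a'_def by (metis comp_apply transpose_involutory)
  show ?thesis unfolding w(3)[symmetric] eq XE_def using kl' sup' by (intro CollectI exI[of _ "a'"] exI[of _ "?s k"] exI[of _ "?s l"]) simp
qed

lemma XE_gamma:
  assumes "e \<in> XE n" "1 \<le> m" "m \<le> n"
  shows "cls n (gw m @ (SOME w. w \<in> e) @ gw m) \<in> XE n"
proof -
  obtain a k l where e: "e = cls n (gword n a @ xw k l @ gword n a)" and kl: "1 \<le> k" "k \<le> n" "1 \<le> l" "l \<le> n" "k \<noteq> l"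
    and sup: "\<forall>j. a j \<longrightarrow> j = k \<or> j = l" using assms(1) unfolding XE_def by blast
  have wx: "xw k l \<in> words n" using kl xw_words by auto
  have we: "gword n a @ xw k l @ gword n a \<in> words n" using wx by simp
  obtain w where w: "w \<in> words n" "cls n w = e" "w = (SOME w. w \<in> e)" using cls_some[OF we] e by auto
  have s1: "cls n (gw m @ w @ gw m) = cls n ((gw m @ gword n a) @ xw k l @ (gword n a @ gw m))"
    using cls_ctx[of n w "gword n a @ xw k l @ gword n a" "gw m" "gw m"] w e assms by simp
  show ?thesis
  proof (cases "m = k \<or> m = l")
    case True
    define a' where "a' = a(m := \<not> a m)"
    have "cls n ((gw m @ gword n a) @ xw k l @ (gword n a @ gw m)) = cls n (gword n a' @ xw k l @ (gword n a @ gw m))"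
      unfolding a'_def using assms wx by (intro cls_ctxR gamma_gword) auto
    also have "\<dots> = cls n (gword n a' @ xw k l @ gword n a')"
      unfolding a'_def using assms wx cls_ctxL[OF gword_gamma[of m n a], of "gword n (a(m := \<not> a m)) @ xw k l"]
      by simp
    finally have eq: "cls n (gw m @ w @ gw m) = cls n (gword n a' @ xw k l @ gword n a')" using s1 by simp
    have sup': "\<forall>j. a' j \<longrightarrow> j = k \<or> j = l" using sup True unfolding a'_def by auto
    show ?thesis unfolding w(3)[symmetric] eq XE_def using kl sup' by (intro CollectI exI[of _ "a'"] exI[of _ k] exI[of _ l]) simp
  next
    case False
    have "cls n ((gw m @ gword n a) @ xw k l @ (gword n a @ gw m)) = cls n ((gword n a @ gw m) @ xw k l @ (gword n a @ gw m))"
      using assms wx by (intro cls_ctxR gamma_gword_comm) auto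
    also have "\<dots> = cls n ((gword n a @ gw m) @ xw k l @ (gw m @ gword n a))"
      using assms wx cls_ctxL[OF gamma_gword_comm[of m n a, symmetric], of "(gword n a @ gw m) @ xw k l"] by simp
    also have "\<dots> = cls n (gword n a @ (gw m @ xw k l @ gw m) @ gword n a)" by simp
    also have "\<dots> = cls n (gword n a @ xw k l @ gword n a)"
      using assms kl False by (intro cls_ctx GX1) auto
    finally have eq: "cls n (gw m @ w @ gw m) = cls n (gword n a @ xw k l @ gword n a)" using s1 by simp
    show ?thesis unfolding w(3)[symmetric] eq XE_def using kl sup by (intro CollectI exI[of _ a] exI[of _ k] exI[of _ l]) simp
  qed
qed


lemma invw_Cons: "invw (x#u) = invw u @ [inv_letter x]" by (simp add: invw_def)

lemma xw_succ: "xw i (Suc i) = sw i" by (simp add: xw_lt)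

lemma conjW: "Wword d \<Longrightarrow> d \<in> words n \<Longrightarrow> 1 \<le> i \<Longrightarrow> i < n \<Longrightarrow> cls n (d @ sw i @ invw d) \<in> XE n"
proof (induction d)
  case Nil
  have "cls n (sw i) = cls n (gword n (\<lambda>_. False) @ xw i (Suc i) @ gword n (\<lambda>_. False))"
    by (simp add: gword_empty xw_succ)
  then show ?case unfolding XE_def using Nil
    by (intro CollectI exI[of _ "\<lambda>_. False"] exI[of _ i] exI[of _ "Suc i"]) simp
next
  case (Cons y d)
  obtain g b where y: "y = (g,b)" by fastforce
  have IH: "cls n (d @ sw i @ invw d) \<in> XE n" using Cons y by (cases g) auto
  have wd: "d @ sw i @ invw d \<in> words n" using Cons by auto
  obtain w where w: "w = (SOME w. w \<in> cls n (d @ sw i @ invw d))" "cls n w = cls n (d @ sw i @ invw d)" "w \<in> words n"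
    using cls_some[OF wd] by auto
  have eqy: "(y#d) @ sw i @ invw (y#d) = [y] @ (d @ sw i @ invw d) @ [inv_letter y]" by (simp add: invw_def)
  show ?case
  proof (cases g)
    case (Sg j) then show ?thesis using Cons y by simp
  next
    case (Rg m)
    have m: "1 \<le> m" "m < n" using Cons.prems y Rg by auto
    have c1: "cls n [y] = cls n (rw m)" using y Rg m by (cases b) (auto simp: rinv)
    have c2: "cls n [inv_letter y] = cls n (rw m)" using y Rg m by (cases b) (auto simp: rinv inv_letter_def)
    have "cls n ((y#d) @ sw i @ invw (y#d)) = cls n (rw m @ w @ rw m)"
      unfolding eqy by (rule cls_ctx2[OF c1 cls_ctx2[OF w(2)[symmetric] c2]])
    then show ?thesis using XE_rho[OF IH m] w(1) by simp
  next
    case (Gg m)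
    have m: "1 \<le> m" "m \<le> n" using Cons.prems y Gg by auto
    have c1: "cls n [y] = cls n (gw m)" using y Gg m by (cases b) (auto simp: ginv)
    have c2: "cls n [inv_letter y] = cls n (gw m)" using y Gg m by (cases b) (auto simp: ginv inv_letter_def)
    have "cls n ((y#d) @ sw i @ invw (y#d)) = cls n (gw m @ w @ gw m)"
      unfolding eqy by (rule cls_ctx2[OF c1 cls_ctx2[OF w(2)[symmetric] c2]])
    then show ?thesis using XE_gamma[OF IH m] w(1) by simp
  qed
qed

lemma conjB_cls: "x \<in> words n \<Longrightarrow> g \<in> words n \<Longrightarrow> conjB n (cls n x) (cls n g) = cls n (invw g @ x @ g)"
  unfolding conjB_def by (simp add: TVB_inv TVB_mult)

lemma gamma_mult: "1 \<le> i \<Longrightarrow> i \<le> n \<Longrightarrow> 1 \<le> j \<Longrightarrow> j \<le> n \<Longrightarrow> gamma n i \<otimes>\<^bsub>TVB n\<^esub> gamma n j = cls n (gw i @ gw j)"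
  unfolding gamma_def by (simp add: TVB_mult)

lemma HL_gensI:
  assumes "1 \<le> k" "k < l" "l \<le> n"
    "e \<in> {xg n k l, conjB n (xg n k l) (gamma n k), conjB n (xg n k l) (gamma n l),
      conjB n (xg n k l) (gamma n k \<otimes>\<^bsub>TVB n\<^esub> gamma n l)}"
  shows "e \<in> HL_gens n"
  unfolding HL_gens_def using assms by (intro UN_I[of k] UN_I[of l]) auto

lemma XE_lt:
  assumes kl: "1 \<le> k" "k < l" "l \<le> n" and sup: "\<forall>j. a j \<longrightarrow> j = k \<or> j = l"
  shows "cls n (gword n a @ xw k l @ gword n a) \<in> HL_gens n"
proof -
  have wx: "xw k l \<in> words n" using kl by (simp add: xw_lt)
  have key: "cls n (gword n a @ xw k l @ gword n a) = cls n (c' @ xw k l @ c)"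
    if "Wword c" "c \<in> words n" "F c = F (gword n a)" "Wword c'" "c' \<in> words n" "F c' = F (gword n a)" for c c'
  proof -
    have "cls n (gword n a) = cls n c" using that by (intro W_eq) auto
    moreover have "cls n (gword n a) = cls n c'" using that by (intro W_eq) auto
    ultimately show ?thesis using cls_ctx2 by metis
  qed
  have Fg: "F (gword n a) (j,b) = (j, b \<noteq> (a j \<and> 1 \<le> j \<and> j \<le> n))" for j b by (rule F_gword)
  consider "\<not> a k" "\<not> a l" | "a k" "\<not> a l" | "\<not> a k" "a l" | "a k" "a l" by blast
  then show ?thesis
  proof cases
    case 1
    then have "gword n a = []" using sup by (intro gword_empty) auto
    then show ?thesis using kl by (intro HL_gensI[of k l]) (auto simp: xg_def)
  next
    case 2
    have "cls n (gword n a @ xw k l @ gword n a) = cls n ([(Gg k, False)] @ xw k l @ gw k)"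
      by (rule key) (use kl sup 2 in \<open>auto simp: fun_eq_iff Fg\<close>)
    also have "\<dots> = conjB n (xg n k l) (gamma n k)"
      unfolding xg_def gamma_def using kl wx by (simp add: conjB_cls invw_def inv_letter_def)
    finally show ?thesis using kl by (intro HL_gensI[of k l]) auto
  next
    case 3
    have "cls n (gword n a @ xw k l @ gword n a) = cls n ([(Gg l, False)] @ xw k l @ gw l)"
      by (rule key) (use kl sup 3 in \<open>auto simp: fun_eq_iff Fg\<close>)
    also have "\<dots> = conjB n (xg n k l) (gamma n l)"
      unfolding xg_def gamma_def using kl wx by (simp add: conjB_cls invw_def inv_letter_def)
    finally show ?thesis using kl by (intro HL_gensI[of k l]) auto
  next
    case 4
    have "cls n (gword n a @ xw k l @ gword n a) = cls n ([(Gg l, False), (Gg k, False)] @ xw k l @ (gw k @ gw l))"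
      by (rule key) (use kl sup 4 in \<open>auto simp: fun_eq_iff Fg\<close>)
    also have "\<dots> = conjB n (xg n k l) (gamma n k \<otimes>\<^bsub>TVB n\<^esub> gamma n l)"
      unfolding xg_def using kl wx by (simp add: gamma_mult conjB_cls invw_def inv_letter_def)
    finally show ?thesis using kl by (intro HL_gensI[of k l]) auto
  qed
qed

lemma XE_HL: "XE n \<subseteq> HL_gens n"
proof
  fix e assume "e \<in> XE n"
  then obtain a k l where e: "e = cls n (gword n a @ xw k l @ gword n a)" and kl: "1 \<le> k" "k \<le> n" "1 \<le> l" "l \<le> n" "k \<noteq> l"
    and sup: "\<forall>j. a j \<longrightarrow> j = k \<or> j = l" unfolding XE_def by blast
  show "e \<in> HL_gens n"
  proof (cases "k < l")
    case True then show ?thesis using XE_lt kl sup e by auto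
  next
    case False
    then have lk: "l < k" using kl by auto
    define a' where "a' = (\<lambda>j. if j = k \<or> j = l then \<not> a j else a j)"
    have Fg: "F (gword n c) (j,b) = (j, b \<noteq> (c j \<and> 1 \<le> j \<and> j \<le> n))" for c j b by (rule F_gword)
    have wx: "xw l k \<in> words n" using kl lk by (simp add: xw_lt)
    have c1: "cls n (gword n a @ gw k @ gw l) = cls n (gword n a')"
      by (rule W_eq) (use kl in \<open>auto simp: fun_eq_iff Fg a'_def\<close>)
    have c2: "cls n (gw l @ gw k @ gword n a) = cls n (gword n a')"
      by (rule W_eq) (use kl in \<open>auto simp: fun_eq_iff Fg a'_def\<close>)
    have "e = cls n (gword n a @ (gw k @ gw l @ xw l k @ gw l @ gw k) @ gword n a)"
      unfolding e using kl lk by (intro cls_ctx GX2) auto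
    also have "\<dots> = cls n ((gword n a @ gw k @ gw l) @ xw l k @ (gw l @ gw k @ gword n a))" by simp
    also have "\<dots> = cls n (gword n a' @ xw l k @ gword n a')"
      by (rule cls_ctx2[OF c1 cls_ctx2[OF HOL.refl c2]])
    finally have ee: "e = cls n (gword n a' @ xw l k @ gword n a')" .
    have sup': "\<forall>j. a' j \<longrightarrow> j = l \<or> j = k" using sup unfolding a'_def by auto
    show ?thesis unfolding ee by (rule XE_lt) (use kl lk sup' in auto)
  qed
qed

definition delS :: "word \<Rightarrow> word" where
  "delS w = filter (\<lambda>x. case fst x of Sg _ \<Rightarrow> False | _ \<Rightarrow> True) w"

lemma delS_Nil[simp]: "delS [] = []" by (simp add: delS_def)
lemma delS_snoc: "delS (w@[x]) = delS w @ (case fst x of Sg _ \<Rightarrow> [] | _ \<Rightarrow> [x])"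
  by (simp add: delS_def split: gen.split)
lemma delS_W[simp]: "Wword (delS w)" by (auto simp: delS_def Wword_def split: gen.splits)
lemma delS_words: "w \<in> words n \<Longrightarrow> delS w \<in> words n" by (auto simp: delS_def words_def)
lemma F_delS: "F (delS w) = F w"
  by (induction w) (auto simp: delS_def split: gen.split)

lemma HL_carrier: "HL_gens n \<subseteq> carrier (TVB n)"
proof -
  interpret G: group "TVB n" by (rule group_TVB)
  have x: "xg n i j \<in> carrier (TVB n)" if "1 \<le> i" "i < j" "j \<le> n" for i j
    unfolding xg_def using that by (intro cls_carrier) (simp add: xw_lt)
  have g: "gamma n i \<in> carrier (TVB n)" if "1 \<le> i" "i \<le> n" for i
    unfolding gamma_def using that by (intro cls_carrier) simp
  show ?thesis unfolding HL_gens_def conjB_def using x g by auto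
qed

lemma decomp_main:
  "w \<in> words n \<Longrightarrow> \<exists>k\<in>generate (TVB n) (HL_gens n). cls n w = k \<otimes>\<^bsub>TVB n\<^esub> cls n (delS w)"
proof (induction w rule: rev_induct)
  interpret G: group "TVB n" by (rule group_TVB)
  case Nil
  have "cls n [] = \<one>\<^bsub>TVB n\<^esub> \<otimes>\<^bsub>TVB n\<^esub> cls n (delS [])"
    using G.l_one[OF cls_carrier[of "[]" n]] by simp
  then show ?case using generate.one[of "TVB n" "HL_gens n"] by blast
next
  interpret G: group "TVB n" by (rule group_TVB)
  have sg: "subgroup (generate (TVB n) (HL_gens n)) (TVB n)" by (rule G.generate_is_subgroup[OF HL_carrier])
  case (snoc x w)
  then obtain k where k: "k \<in> generate (TVB n) (HL_gens n)" "cls n w = k \<otimes>\<^bsub>TVB n\<^esub> cls n (delS w)" by auto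
  have kc: "k \<in> carrier (TVB n)" using k(1) sg subgroup.subset by blast
  define d where "d = delS w"
  have wd: "d \<in> words n" "Wword d" unfolding d_def using snoc delS_words by auto
  have wx: "[x] \<in> words n" "w \<in> words n" using snoc.prems by auto
  have "cls n (w @ [x]) = cls n w \<otimes>\<^bsub>TVB n\<^esub> cls n [x]" using wx by (simp add: TVB_mult)
  then have e1: "cls n (w @ [x]) = (k \<otimes>\<^bsub>TVB n\<^esub> cls n d) \<otimes>\<^bsub>TVB n\<^esub> cls n [x]"
    using k unfolding d_def by simp
  obtain g b where x: "x = (g,b)" by fastforce
  show ?case
  proof (cases g)
    case (Sg i)
    have i: "1 \<le> i" "i < n" using wx x Sg by auto
    have dx: "delS (w@[x]) = d" unfolding d_def using x Sg by (simp add: delS_snoc)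
    define z where "z = cls n (d @ [x] @ invw d)"
    have inXE: "cls n (d @ sw i @ invw d) \<in> XE n" using conjW[OF wd(2,1) i] .
    have zz: "cls n (d @ sw i @ invw d) \<in> generate (TVB n) (HL_gens n)"
      by (rule generate.incl) (rule subsetD[OF XE_HL inXE])
    have zK: "z \<in> generate (TVB n) (HL_gens n)"
    proof (cases b)
      case True
      then have "z = cls n (d @ sw i @ invw d)" unfolding z_def using x Sg by simp
      then show ?thesis using zz by simp
    next
      case False
      have iw: "invw (sw i) = [(Sg i, False)]" by (simp add: invw_def inv_letter_def)
      have w3: "d @ sw i @ invw d \<in> words n" using wd i by simp
      have "inv\<^bsub>TVB n\<^esub> (cls n (d @ sw i @ invw d)) = cls n (invw (d @ sw i @ invw d))"
        by (rule TVB_inv[OF w3])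
      also have "invw (d @ sw i @ invw d) = d @ [x] @ invw d" using x Sg False by (simp add: invw_Cons inv_letter_def)
      finally have "inv\<^bsub>TVB n\<^esub> (cls n (d @ sw i @ invw d)) = z" unfolding z_def .
      then show ?thesis using subgroup.m_inv_closed[OF sg zz] by simp
    qed
    have zc: "z \<in> carrier (TVB n)" unfolding z_def using wd wx by (intro cls_carrier) auto
    have "z \<otimes>\<^bsub>TVB n\<^esub> cls n d = cls n (d @ [x] @ (invw d @ d))" unfolding z_def using wd wx by (simp add: TVB_mult)
    also have "\<dots> = cls n (d @ [x] @ [])" using wd wx by (intro cls_ctxL invw_inv) auto
    also have "\<dots> = cls n d \<otimes>\<^bsub>TVB n\<^esub> cls n [x]" using wd wx by (simp add: TVB_mult)
    finally have zd: "z \<otimes>\<^bsub>TVB n\<^esub> cls n d = cls n d \<otimes>\<^bsub>TVB n\<^esub> cls n [x]" .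
    have "cls n (w @ [x]) = k \<otimes>\<^bsub>TVB n\<^esub> (cls n d \<otimes>\<^bsub>TVB n\<^esub> cls n [x])"
      using e1 kc wd wx by (simp add: G.m_assoc cls_carrier)
    also have "\<dots> = (k \<otimes>\<^bsub>TVB n\<^esub> z) \<otimes>\<^bsub>TVB n\<^esub> cls n d"
      using zd kc zc wd by (simp add: G.m_assoc cls_carrier)
    finally show ?thesis using dx subgroup.m_closed[OF sg k(1) zK] by auto
  next
    case (Rg i)
    have dx: "delS (w@[x]) = d @ [x]" unfolding d_def using x Rg by (simp add: delS_snoc)
    have "cls n (w @ [x]) = k \<otimes>\<^bsub>TVB n\<^esub> (cls n d \<otimes>\<^bsub>TVB n\<^esub> cls n [x])"
      using e1 kc wd wx by (simp add: G.m_assoc cls_carrier)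
    also have "\<dots> = k \<otimes>\<^bsub>TVB n\<^esub> cls n (delS (w@[x]))" using dx wd wx by (simp add: TVB_mult)
    finally show ?thesis using k(1) by auto
  next
    case (Gg i)
    have dx: "delS (w@[x]) = d @ [x]" unfolding d_def using x Gg by (simp add: delS_snoc)
    have "cls n (w @ [x]) = k \<otimes>\<^bsub>TVB n\<^esub> (cls n d \<otimes>\<^bsub>TVB n\<^esub> cls n [x])"
      using e1 kc wd wx by (simp add: G.m_assoc cls_carrier)
    also have "\<dots> = k \<otimes>\<^bsub>TVB n\<^esub> cls n (delS (w@[x]))" using dx wd wx by (simp add: TVB_mult)
    finally show ?thesis using k(1) by auto
  qed
qed


lemma F_out: "w \<in> words n \<Longrightarrow> j = 0 \<or> n < j \<Longrightarrow> F w (j,b) = (j,b)"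
proof (induction w arbitrary: b)
  case Nil then show ?case by simp
next
  case (Cons x w)
  obtain g c where x: "x = (g,c)" by fastforce
  have IH: "F w (j,b) = (j,b)" using Cons by auto
  have v: "valid_gen n g" using Cons.prems x by auto
  show ?case using IH v Cons.prems(2) x by (cases g) (auto simp: transpose_def)
qed

lemma F_id_iff: "w \<in> words n \<Longrightarrow> F w = id \<longleftrightarrow> word_perm w = id \<and> (\<forall>j. 1 \<le> j \<and> j \<le> n \<longrightarrow> \<not> flipv w j)"
proof
  assume "F w = id"
  then show "word_perm w = id \<and> (\<forall>j. 1 \<le> j \<and> j \<le> n \<longrightarrow> \<not> flipv w j)"
    using F_fst[of w _ False] unfolding flipv_def by (auto simp: fun_eq_iff)
next
  assume w: "w \<in> words n" and a: "word_perm w = id \<and> (\<forall>j. 1 \<le> j \<and> j \<le> n \<longrightarrow> \<not> flipv w j)"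
  show "F w = id"
  proof (rule ext)
    fix p :: "nat \<times> bool"
    obtain j b where p: "p = (j,b)" by fastforce
    show "F w p = id p"
    proof (cases "1 \<le> j \<and> j \<le> n")
      case True then show ?thesis using a p F_char[of w j b] by simp
    next
      case False then show ?thesis using F_out[OF w, of j b] p by auto
    qed
  qed
qed

definition KER :: "nat \<Rightarrow> word set set" where
  "KER n = {cls n w | w. w \<in> words n \<and> F w = id}"

lemma KER_subgroup: "subgroup (KER n) (TVB n)"
proof -
  interpret G: group "TVB n" by (rule group_TVB)
  show ?thesis
  proof (rule G.subgroupI)
    show "KER n \<subseteq> carrier (TVB n)" unfolding KER_def TVB_carrier by auto
    show "KER n \<noteq> {}" unfolding KER_def by (auto intro!: exI[of _ "[]"])
  next
    fix a assume "a \<in> KER n"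
    then obtain w where w: "w \<in> words n" "F w = id" "a = cls n w" unfolding KER_def by auto
    have "F (invw w @ w) = F []" using F_cls[OF _ invw_inv[OF w(1)]] w by simp
    then have "F (invw w) = id" using w by simp
    then show "inv\<^bsub>TVB n\<^esub> a \<in> KER n" unfolding KER_def using w TVB_inv by auto
  next
    fix a b assume "a \<in> KER n" "b \<in> KER n"
    then obtain u v where "u \<in> words n" "F u = id" "a = cls n u" "v \<in> words n" "F v = id" "b = cls n v"
      unfolding KER_def by auto
    then show "a \<otimes>\<^bsub>TVB n\<^esub> b \<in> KER n" unfolding KER_def using TVB_mult by fastforce
  qed
qed

lemma pp_rev_inv: "pp (rev p) \<circ> pp p = id"
proof (induction p)
  case Nil then show ?case by simp
next
  case (Cons i p)
  have h: "\<forall>x. pp (rev p) (pp p x) = x" using Cons by (metis comp_apply id_apply)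
  show ?case by (simp add: fun_eq_iff h)
qed

lemma F_xw: "1 \<le> k \<Longrightarrow> k \<le> n \<Longrightarrow> 1 \<le> l \<Longrightarrow> l \<le> n \<Longrightarrow> k \<noteq> l \<Longrightarrow> F (xw k l) = id"
proof -
  have gen: "F (rwl (rev p) @ sw i @ rwl p) = id" for p i
  proof (rule ext)
    fix q :: "nat \<times> bool"
    obtain j b where q: "q = (j,b)" by fastforce
    have "pp (rev p) (pp p j) = j" using pp_rev_inv[of p] by (metis comp_apply id_apply)
    then show "F (rwl (rev p) @ sw i @ rwl p) q = id q" using q by (simp add: F_rwl)
  qed
  assume "1 \<le> k" "k \<le> n" "1 \<le> l" "l \<le> n" "k \<noteq> l"
  then show ?thesis using gen by (cases "k < l") (auto simp: xw_lt xw_gt)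
qed

lemma KER_conj: "x \<in> KER n \<Longrightarrow> h \<in> carrier (TVB n) \<Longrightarrow> conjB n x h \<in> KER n"
proof -
  assume x: "x \<in> KER n" and h: "h \<in> carrier (TVB n)"
  obtain w where w: "w \<in> words n" "F w = id" "x = cls n w" using x unfolding KER_def by auto
  obtain u where u: "u \<in> words n" "h = cls n u" using h unfolding TVB_carrier by auto
  have "F (invw u @ u) = F []" using F_cls[OF _ invw_inv[OF u(1)]] u by simp
  then have "F (invw u @ w @ u) = id" using w by (simp add: comp_assoc)
  then show ?thesis unfolding KER_def using w u conjB_cls by auto
qed

lemma HL_KER: "HL_gens n \<subseteq> KER n"
proof -
  have x: "xg n i j \<in> KER n" if "1 \<le> i" "i < j" "j \<le> n" for i j
    unfolding xg_def KER_def using that F_xw[of i n j] by (auto simp: xw_lt)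
  have g: "gamma n i \<in> carrier (TVB n)" if "1 \<le> i" "i \<le> n" for i
    unfolding gamma_def using that by (intro cls_carrier) simp
  have gg: "gamma n i \<otimes>\<^bsub>TVB n\<^esub> gamma n j \<in> carrier (TVB n)" if "1 \<le> i" "i \<le> n" "1 \<le> j" "j \<le> n" for i j
    using that gamma_mult cls_carrier by simp
  show ?thesis unfolding HL_gens_def using x g gg KER_conj by auto
qed

lemma K_eq: "generate (TVB n) (HL_gens n) = KER n"
proof
  interpret G: group "TVB n" by (rule group_TVB)
  show "generate (TVB n) (HL_gens n) \<subseteq> KER n"
    by (rule G.generate_subgroup_incl[OF HL_KER KER_subgroup])
  show "KER n \<subseteq> generate (TVB n) (HL_gens n)"
  proof
    fix g assume "g \<in> KER n"
    then obtain w where w: "w \<in> words n" "F w = id" "g = cls n w" unfolding KER_def by auto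
    obtain k where k: "k \<in> generate (TVB n) (HL_gens n)" "cls n w = k \<otimes>\<^bsub>TVB n\<^esub> cls n (delS w)"
      using decomp_main[OF w(1)] by auto
    have wd: "delS w \<in> words n" using delS_words[OF w(1)] .
    have Fd: "F (delS w) = id" using w F_delS by simp
    have "cls n (delS w) = cls n []"
      using Wfaithful[of "delS w" n] F_id_iff[OF wd] Fd wd by auto
    moreover have "k \<in> carrier (TVB n)" using k(1) G.generate_is_subgroup[OF HL_carrier] subgroup.subset by blast
    ultimately have "cls n w = k" using k(2) by (simp add: TVB_one[symmetric])
    then show "g \<in> generate (TVB n) (HL_gens n)" using w k by simp
  qed
qed

definition psiH :: "nat \<Rightarrow> word set \<Rightarrow> word set" where
  "psiH n C = cls n (gword n (flipv (SOME w. w \<in> C)))"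

lemma psi_cls: "w \<in> words n \<Longrightarrow> psiH n (cls n w) = cls n (gword n (flipv w))"
  unfolding psiH_def using cls_some flipv_cls by metis

lemma gword_mult: "cls n (gword n a @ gword n b) = cls n (gword n (\<lambda>j. a j \<noteq> b j))"
  by (rule W_eq) (auto simp: fun_eq_iff F_gword)

lemma flipv_app: "word_perm v = id \<Longrightarrow> flipv (u@v) j = (flipv v j \<noteq> flipv u j)"
proof -
  assume v: "word_perm v = id"
  have "F v (j,False) = (j, flipv v j)" using F_char[of v j False] v by simp
  then show ?thesis unfolding flipv_def using F_char[of u j "flipv v j"] by (simp add: flipv_def)
qed

lemma gword_congr: "\<forall>j. 1 \<le> j \<and> j \<le> n \<longrightarrow> a j = b j \<Longrightarrow> gword n a = gword n b"
  unfolding gword_def by (rule gwl_cong) auto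

lemma gamma_gword_eq: "1 \<le> j \<Longrightarrow> j \<le> n \<Longrightarrow> gamma n j = cls n (gword n (\<lambda>i. i = j))"
  unfolding gamma_def by (rule W_eq) (auto simp: fun_eq_iff F_gword)

lemma A_set_eq: "A_set n = {cls n (gword n a) | a. True}"
proof
  show "A_set n \<subseteq> {cls n (gword n a) | a. True}"
  proof
    fix x assume "x \<in> A_set n"
    then show "x \<in> {cls n (gword n a) | a. True}" unfolding A_set_def
    proof (induction rule: generate.induct)
      case one
      have "gword n (\<lambda>_. False) = []" by (rule gword_empty) auto
      then show ?case by (auto simp: TVB_one intro!: exI[of _ "\<lambda>_. False"])
    next
      case (incl h)
      then show ?case using gamma_gword_eq by blast
    next
      case (inv h)
      then obtain j where j: "1 \<le> j" "j \<le> n" "h = gamma n j" by auto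
      have "inv\<^bsub>TVB n\<^esub> h = cls n [(Gg j, False)]" using j TVB_inv[of "gw j" n] unfolding gamma_def
        by (simp add: invw_def inv_letter_def)
      also have "\<dots> = cls n (gword n (\<lambda>i. i = j))" by (rule W_eq) (use j in \<open>auto simp: fun_eq_iff F_gword\<close>)
      finally show ?case by blast
    next
      case (eng h1 h2)
      then obtain a b where "h1 = cls n (gword n a)" "h2 = cls n (gword n b)" by auto
      then have "h1 \<otimes>\<^bsub>TVB n\<^esub> h2 = cls n (gword n (\<lambda>j. a j \<noteq> b j))" using gword_mult by (simp add: TVB_mult)
      then show ?case by blast
    qed
  qed
next
  show "{cls n (gword n a) | a. True} \<subseteq> A_set n"
  proof
    fix x assume "x \<in> {cls n (gword n a) | a. True}"
    then obtain a where x: "x = cls n (gword n a)" by auto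
    have gen: "\<forall>j\<in>set L. 1 \<le> j \<and> j \<le> n \<Longrightarrow> cls n (gwl a L) \<in> A_set n" for L
    proof (induction L rule: rev_induct)
      case Nil then show ?case using generate.one[of "TVB n"] unfolding A_set_def by (simp add: TVB_one)
    next
      case (snoc k L)
      have w: "gwl a L \<in> words n" using snoc.prems by (intro gwl_words) auto
      have kk: "1 \<le> k" "k \<le> n" using snoc.prems by auto
      have c: "cls n (if a k then gw k else []) \<in> A_set n"
      proof (cases "a k")
        case True
        then show ?thesis unfolding A_set_def using kk by (auto intro!: generate.incl simp: gamma_def)
      next
        case False
        then show ?thesis using generate.one[of "TVB n"] unfolding A_set_def by (simp add: TVB_one)
      qed
      have "cls n (gwl a (L@[k])) = cls n (gwl a L) \<otimes>\<^bsub>TVB n\<^esub> cls n (if a k then gw k else [])"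
        using w kk by (simp add: TVB_mult)
      then show ?case using snoc c unfolding A_set_def by (auto intro: generate.eng)
    qed
    show "x \<in> A_set n" unfolding x gword_def by (rule gen) auto
  qed
qed

lemma A_gens_carrier: "{gamma n j | j. 1 \<le> j \<and> j \<le> n} \<subseteq> carrier (TVB n)"
  unfolding gamma_def using cls_carrier by auto

lemma A_subgroup: "subgroup (A_set n) (TVB n)"
  unfolding A_set_def by (rule group.generate_is_subgroup[OF group_TVB A_gens_carrier])

lemma A_sub_TVH: "A_set n \<subseteq> TVH_set n"
  unfolding A_set_eq using TVH_memI by auto

lemma psi_A: "a \<in> A_set n \<Longrightarrow> psiH n a = a"
proof -
  assume "a \<in> A_set n"
  then obtain b where a: "a = cls n (gword n b)" unfolding A_set_eq by auto
  have "gword n (flipv (gword n b)) = gword n b" by (rule gword_congr) (auto simp: flipv_gword)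
  then show ?thesis using a psi_cls by simp
qed

lemma psi_into: "x \<in> TVH_set n \<Longrightarrow> psiH n x \<in> A_set n"
  by (elim TVH_memE) (auto simp: psi_cls A_set_eq)

lemma psi_mult: "x \<in> TVH_set n \<Longrightarrow> y \<in> TVH_set n \<Longrightarrow> psiH n (x \<otimes>\<^bsub>TVB n\<^esub> y) = psiH n x \<otimes>\<^bsub>TVB n\<^esub> psiH n y"
proof -
  assume "x \<in> TVH_set n" "y \<in> TVH_set n"
  then obtain u v where u: "u \<in> words n" "word_perm u = id" "x = cls n u"
    and v: "v \<in> words n" "word_perm v = id" "y = cls n v" by (metis TVH_memE)
  have "psiH n (x \<otimes>\<^bsub>TVB n\<^esub> y) = cls n (gword n (flipv (u@v)))" using u v by (simp add: TVB_mult psi_cls)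
  also have "flipv (u@v) = (\<lambda>j. flipv u j \<noteq> flipv v j)" using flipv_app[OF v(2)] by auto
  also have "cls n (gword n (\<lambda>j. flipv u j \<noteq> flipv v j)) = psiH n x \<otimes>\<^bsub>TVB n\<^esub> psiH n y"
    using u v gword_mult by (simp add: TVB_mult psi_cls)
  finally show ?thesis .
qed

lemma TVH_simps[simp]: "carrier (TVH n) = TVH_set n" "monoid.mult (TVH n) = monoid.mult (TVB n)" "one (TVH n) = one (TVB n)"
  by (simp_all add: TVH_def)
lemma A_grp_simps[simp]: "carrier (A_grp n) = A_set n" "monoid.mult (A_grp n) = monoid.mult (TVB n)" "one (A_grp n) = one (TVB n)"
  by (simp_all add: A_grp_def)

lemma psi_hom: "psiH n \<in> hom (TVH n) (A_grp n)"
  unfolding hom_def using psi_into psi_mult by auto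

lemma kernel_eq: "kernel (TVH n) (A_grp n) (psiH n) = KER n"
proof -
  have "kernel (TVH n) (A_grp n) (psiH n) = {x. x \<in> TVH_set n \<and> psiH n x = cls n []}"
    unfolding kernel_def by (simp add: TVB_one)
  also have "\<dots> = KER n"
  proof
    show "{x. x \<in> TVH_set n \<and> psiH n x = cls n []} \<subseteq> KER n"
    proof
      fix x assume xx: "x \<in> {x. x \<in> TVH_set n \<and> psiH n x = cls n []}"
      then have x1: "x \<in> TVH_set n" and x2: "psiH n x = cls n []" by auto
      obtain w where w: "w \<in> words n" "word_perm w = id" "x = cls n w"
        using x1 by (rule TVH_memE)
      have "cls n (gword n (flipv w)) = cls n []" using psi_cls[OF w(1)] w(3) x2 by simp
      then have fe: "flipv (gword n (flipv w)) = flipv []" by (intro flipv_cls) auto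
      have "\<forall>j. 1 \<le> j \<and> j \<le> n \<longrightarrow> \<not> flipv w j"
      proof (intro allI impI)
        fix j assume j: "1 \<le> j \<and> j \<le> n"
        have "flipv (gword n (flipv w)) j = flipv [] j" using fe by simp
        moreover have "flipv [] j = False" unfolding flipv_def by simp
        ultimately show "\<not> flipv w j" using j flipv_gword[of n "flipv w" j] by simp
      qed
      then have "F w = id" using F_id_iff[OF w(1)] w(2) by simp
      then show "x \<in> KER n" unfolding KER_def using w by blast
    qed
    show "KER n \<subseteq> {x. x \<in> TVH_set n \<and> psiH n x = cls n []}"
    proof
      fix x assume "x \<in> KER n"
      then obtain w where w: "w \<in> words n" "F w = id" "x = cls n w" unfolding KER_def by auto
      then have p: "word_perm w = id" "\<forall>j. 1 \<le> j \<and> j \<le> n \<longrightarrow> \<not> flipv w j"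
        using F_id_iff[OF w(1)] by auto
      then have g: "gword n (flipv w) = []" by (intro gword_empty) auto
      have "x \<in> TVH_set n" using TVH_memI[OF w(1) p(1)] w(3) by simp
      moreover have "psiH n x = cls n []" using psi_cls[OF w(1)] g w(3) by simp
      ultimately show "x \<in> {x. x \<in> TVH_set n \<and> psiH n x = cls n []}" by simp
    qed
  qed
  finally show ?thesis .
qed


lemma group_A: "group (A_grp n)"
  unfolding A_grp_def by (rule group.subgroup_imp_group[OF group_TVB A_subgroup])

theorem mainTheorem11:
  fixes n :: nat
  assumes "n \<ge> 2"
  shows "\<exists>psi. psi \<in> hom (TVH n) (A_grp n)
           \<and> psi ` TVH_set n = A_set n
           \<and> (\<forall>k l. 1 \<le> k \<and> k \<le> n \<and> 1 \<le> l \<and> l \<le> n \<and> k \<noteq> l \<longrightarrow> psi (xg n k l) = \<one>\<^bsub>TVB n\<^esub>)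
           \<and> (\<forall>j. 1 \<le> j \<and> j \<le> n \<longrightarrow> psi (gamma n j) = gamma n j)
           \<and> (\<forall>a\<in>A_set n. psi a = a)
           \<and> kernel (TVH n) (A_grp n) psi = generate (TVB n) (HL_gens n)
           \<and> kernel (TVH n) (A_grp n) psi \<lhd> TVH n
           \<and> A_set n \<subseteq> TVH_set n
           \<and> kernel (TVH n) (A_grp n) psi \<inter> A_set n = {\<one>\<^bsub>TVB n\<^esub>}
           \<and> kernel (TVH n) (A_grp n) psi <#>\<^bsub>TVB n\<^esub> A_set n = TVH_set n"
proof -
  interpret G: group "TVB n" by (rule group_TVB)
  let ?psi = "psiH n"
  let ?ker = "kernel (TVH n) (A_grp n) ?psi"
  have hom: "?psi \<in> hom (TVH n) (A_grp n)" by (rule psi_hom)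
  have img: "?psi ` TVH_set n = A_set n"
  proof
    show "?psi ` TVH_set n \<subseteq> A_set n" using psi_into by auto
    show "A_set n \<subseteq> ?psi ` TVH_set n"
    proof
      fix a assume a: "a \<in> A_set n"
      then have "a = ?psi a" "a \<in> TVH_set n" using psi_A A_sub_TVH[of n] by auto
      then show "a \<in> ?psi ` TVH_set n" by (metis image_eqI)
    qed
  qed
  have xg1: "\<forall>k l. 1 \<le> k \<and> k \<le> n \<and> 1 \<le> l \<and> l \<le> n \<and> k \<noteq> l \<longrightarrow> ?psi (xg n k l) = \<one>\<^bsub>TVB n\<^esub>"
  proof (intro allI impI)
    fix k l assume kl: "1 \<le> k \<and> k \<le> n \<and> 1 \<le> l \<and> l \<le> n \<and> k \<noteq> l"
    have w: "xw k l \<in> words n" using kl xw_words by auto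
    have "F (xw k l) = id" using F_xw kl by auto
    then have "\<forall>j. \<not> flipv (xw k l) j" unfolding flipv_def by simp
    then have "gword n (flipv (xw k l)) = []" by (intro gword_empty) auto
    then show "?psi (xg n k l) = \<one>\<^bsub>TVB n\<^esub>" unfolding xg_def using psi_cls[OF w] by (simp add: TVB_one)
  qed
  have gA: "gamma n j \<in> A_set n" if "1 \<le> j" "j \<le> n" for j
    unfolding A_set_def using that by (intro generate.incl) auto
  have gam: "\<forall>j. 1 \<le> j \<and> j \<le> n \<longrightarrow> ?psi (gamma n j) = gamma n j"
    using psi_A gA by auto
  have idA: "\<forall>a\<in>A_set n. ?psi a = a" using psi_A by blast
  have ker: "?ker = generate (TVB n) (HL_gens n)" using kernel_eq K_eq by simp
  have gh: "group_hom (TVH n) (A_grp n) ?psi"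
    unfolding group_hom_def group_hom_axioms_def using group_TVH group_A hom by auto
  have nrm: "?ker \<lhd> TVH n" by (rule group_hom.normal_kernel[OF gh])
  have sub: "A_set n \<subseteq> TVH_set n" by (rule A_sub_TVH)
  have oneA: "\<one>\<^bsub>TVB n\<^esub> \<in> A_set n" unfolding A_set_def by (rule generate.one)
  have oneK: "\<one>\<^bsub>TVB n\<^esub> \<in> ?ker"
  proof -
    have "cls n [] \<in> KER n" unfolding KER_def by auto
    then show ?thesis using kernel_eq by (simp add: TVB_one)
  qed
  have int: "?ker \<inter> A_set n = {\<one>\<^bsub>TVB n\<^esub>}"
  proof
    show "?ker \<inter> A_set n \<subseteq> {\<one>\<^bsub>TVB n\<^esub>}"
    proof
      fix x assume x: "x \<in> ?ker \<inter> A_set n"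
      then have "?psi x = \<one>\<^bsub>TVB n\<^esub>" unfolding kernel_def by simp
      moreover have "?psi x = x" using x psi_A by auto
      ultimately show "x \<in> {\<one>\<^bsub>TVB n\<^esub>}" by simp
    qed
    show "{\<one>\<^bsub>TVB n\<^esub>} \<subseteq> ?ker \<inter> A_set n" using oneA oneK by auto
  qed
  have kerT: "?ker \<subseteq> TVH_set n" unfolding kernel_def by auto
  have Tc: "TVH_set n \<subseteq> carrier (TVB n)" using TVH_subgroup subgroup.subset by blast
  have Ac: "A_set n \<subseteq> carrier (TVB n)" using A_subgroup subgroup.subset by blast
  have prod: "?ker <#>\<^bsub>TVB n\<^esub> A_set n = TVH_set n"
  proof
    show "?ker <#>\<^bsub>TVB n\<^esub> A_set n \<subseteq> TVH_set n"
      unfolding set_mult_def using kerT sub subgroup.m_closed[OF TVH_subgroup] by blast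
    show "TVH_set n \<subseteq> ?ker <#>\<^bsub>TVB n\<^esub> A_set n"
    proof
      fix g assume g: "g \<in> TVH_set n"
      define p where "p = ?psi g"
      have pA: "p \<in> A_set n" unfolding p_def using psi_into g by auto
      have ipA: "inv\<^bsub>TVB n\<^esub> p \<in> A_set n" using subgroup.m_inv_closed[OF A_subgroup pA] .
      define h where "h = g \<otimes>\<^bsub>TVB n\<^esub> inv\<^bsub>TVB n\<^esub> p"
      have hT: "h \<in> TVH_set n" unfolding h_def using g ipA sub subgroup.m_closed[OF TVH_subgroup] by blast
      have "?psi h = ?psi g \<otimes>\<^bsub>TVB n\<^esub> ?psi (inv\<^bsub>TVB n\<^esub> p)" unfolding h_def using psi_mult g ipA sub by blast
      also have "\<dots> = p \<otimes>\<^bsub>TVB n\<^esub> inv\<^bsub>TVB n\<^esub> p" using psi_A[OF ipA] p_def by simp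
      also have "\<dots> = \<one>\<^bsub>TVB n\<^esub>" using pA Ac by auto
      finally have hK: "h \<in> ?ker" unfolding kernel_def using hT by simp
      have gc: "g \<in> carrier (TVB n)" using g Tc by auto
      have pc: "p \<in> carrier (TVB n)" using pA Ac by auto
      have "h \<otimes>\<^bsub>TVB n\<^esub> p = g" unfolding h_def using gc pc by (simp add: G.m_assoc)
      then show "g \<in> ?ker <#>\<^bsub>TVB n\<^esub> A_set n" unfolding set_mult_def using hK pA by blast
    qed
  qed
  show ?thesis
    by (rule exI[of _ ?psi]) (intro conjI hom img xg1 gam idA ker nrm sub int prod)
qed


end
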